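(* Let $G_0$ be one of $\mathrm{SL}(2,\mathbb R)$, $\mathrm{SL}(2,\mathbb C)$, or $\mathrm{SO}_e(n,1)$ with $n\ge2$, with Cartan decomposition $\mathfrak g_0=\mathfrak k_0\oplus\mathfrak s_0$ and maximal compact subgroup $K_0$. Let $G=G_0^3$, $H=\{(g,g,g)\}$, $K=K_0^3$, $\mathfrak s=\mathfrak s_0^3$, $\mathfrak h=\{(X,X,X):X\in\mathfrak g_0\}$. Let $\mathfrak a_1,\mathfrak a_2,\mathfrak a_3\subset\mathfrak s_0$ be maximal abelian subspaces and $\mathfrak a=\mathfrak a_1\times\mathfrak a_2\times\mathfrak a_3$. Then $\mathfrak s=\mathrm{Ad}(K\cap H)\mathfrak a+\mathfrak s\cap\mathfrak h$ holds if and only if $\dim(\mathfrak a_1+\mathfrak a_2+\mathfrak a_3)=2$.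
   Context: $\mathrm{Ad}(K\cap H)\mathfrak a=\{\mathrm{Ad}(k)X: k\in K\cap H, X\in\mathfrak a\}$ (a subset, not necessarily a subspace), and the sum denotes $\{Z+T: Z\in\mathrm{Ad}(K\cap H)\mathfrak a, T\in\mathfrak s\cap\mathfrak h\}$. *)

theory Defs
  imports "HOL-Analysis.Analysis"
begin

definition Ad :: "'a::real_normed_field^'n^'n \<Rightarrow> 'a^'n^'n \<Rightarrow> 'a^'n^'n" where
  "Ad k X = k ** X ** matrix_inv k"

definition max_abelian :: "('a::real_normed_field^'n^'n) set \<Rightarrow> ('a^'n^'n) set \<Rightarrow> bool" where
  "max_abelian s a \<longleftrightarrow>
     subspace a \<and> a \<subseteq> s \<and> (\<forall>X\<in>a. \<forall>Y\<in>a. X ** Y - Y ** X = 0) \<and>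
     (\<forall>b. subspace b \<and> a \<subseteq> b \<and> b \<subseteq> s \<and> (\<forall>X\<in>b. \<forall>Y\<in>b. X ** Y - Y ** X = 0) \<longrightarrow> b = a)"

(* The condition  s = Ad(K \<inter> H) a + (s \<inter> h)  for G = G0^3, H = diagonal,
   s = s0^3, K = K0^3, a = a1 \<times> a2 \<times> a3; K \<inter> H = {(k,k,k). k \<in> K0},
   s \<inter> h = {(T,T,T). T \<in> s0}. *)
definition decomp_holds ::
  "('a::real_normed_field^'n^'n) set \<Rightarrow> ('a^'n^'n) set \<Rightarrow> ('a^'n^'n) set \<Rightarrow> ('a^'n^'n) set \<Rightarrow> ('a^'n^'n) set \<Rightarrow> bool" where
  "decomp_holds s0 K0 a1 a2 a3 \<longleftrightarrow>
     s0 \<times> s0 \<times> s0 =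
       {(Ad k X1 + T, Ad k X2 + T, Ad k X3 + T) | k X1 X2 X3 T.
          k \<in> K0 \<and> X1 \<in> a1 \<and> X2 \<in> a2 \<and> X3 \<in> a3 \<and> T \<in> s0}"

definition sum3 :: "'b::plus set \<Rightarrow> 'b set \<Rightarrow> 'b set \<Rightarrow> 'b set" where
  "sum3 A B C = {x + y + z | x y z. x \<in> A \<and> y \<in> B \<and> z \<in> C}"

definition SL2R :: "(real^2^2) set" where "SL2R = {g. det g = 1}"
definition sl2R :: "(real^2^2) set" where "sl2R = {X. trace X = 0}"
definition K_SL2R :: "(real^2^2) set" where
  "K_SL2R = {k \<in> SL2R. transpose k ** k = mat 1}"
definition s_SL2R :: "(real^2^2) set" where
  "s_SL2R = {X \<in> sl2R. transpose X = X}"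

definition ctrans :: "complex^'n^'n \<Rightarrow> complex^'n^'n" where
  "ctrans X = (\<chi> i j. cnj (X $ j $ i))"
definition SL2C :: "(complex^2^2) set" where "SL2C = {g. det g = 1}"
definition sl2C :: "(complex^2^2) set" where "sl2C = {X. trace X = 0}"
definition K_SL2C :: "(complex^2^2) set" where
  "K_SL2C = {k \<in> SL2C. ctrans k ** k = mat 1}"
definition s_SL2C :: "(complex^2^2) set" where
  "s_SL2C = {X \<in> sl2C. ctrans X = X}"

(* ---------- SO_e(n,1), index type 'n option, None = the time coordinate ---------- *)
definition Jform :: "real^('n::finite option)^('n option)" where
  "Jform = (\<chi> i j. if i = j then (if i = None then -1 else 1) else 0)"
definition SOe :: "(real^('n::finite option)^('n option)) set" where
  "SOe = {g. transpose g ** Jform ** g = Jform \<and> det g = 1 \<and> g $ None $ None > 0}"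
definition so_n1 :: "(real^('n::finite option)^('n option)) set" where
  "so_n1 = {X. transpose X ** Jform + Jform ** X = 0}"
definition K_SOe :: "(real^('n::finite option)^('n option)) set" where
  "K_SOe = {k \<in> SOe. transpose k ** k = mat 1}"
definition s_SOe :: "(real^('n::finite option)^('n option)) set" where
  "s_SOe = {X \<in> so_n1. transpose X = X}"

definition lemma_for :: "('a::real_normed_field^'n^'n) set \<Rightarrow> ('a^'n^'n) set \<Rightarrow> bool" where
  "lemma_for s0 K0 \<longleftrightarrow>
     (\<forall>a1 a2 a3. max_abelian s0 a1 \<and> max_abelian s0 a2 \<and> max_abelian s0 a3 \<longrightarrow>
        (decomp_holds s0 K0 a1 a2 a3 \<longleftrightarrow> dim (sum3 a1 a2 a3) = 2))"

end

theory Submission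
  imports Defs
begin

lemma trig_root: fixes al be :: real shows "\<exists>t. al * cos t + be * sin t = 0"
proof (cases "al = 0 \<and> be = 0")
  case True then show ?thesis by auto
next
  case False
  define r where "r = sqrt (al^2 + be^2)"
  have rpos: "r > 0" using False unfolding r_def by (auto simp: add_pos_nonneg add_nonneg_pos)
  have r2: "r^2 = al^2 + be^2" unfolding r_def by simp
  have "(be / r)^2 + (- al / r)^2 = (al^2 + be^2) / r^2" by (simp add: power_divide add_divide_distrib)
  then have "(be / r)^2 + (- al / r)^2 = 1" using rpos r2 False by simp
  then obtain t where "be / r = cos t" "- al / r = sin t" by (rule sincos_total_2pi) auto
  then have "al = - r * sin t" "be = r * cos t" using rpos by (simp_all add: field_simps)
  then have "al * cos t + be * sin t = 0" by (simp add: algebra_simps)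
  then show ?thesis by auto
qed

lemma planar_core:
  fixes p1 q1 p2 q2 p3 q3 a1 b1 a2 b2 :: real
  assumes n3: "p3 \<noteq> 0 \<or> q3 \<noteq> 0" and d: "p1*q2 - q1*p2 \<noteq> 0"
  shows "\<exists>t c1 c2 c3. cos t*a1 - sin t*b1 = c2*p2 - c1*p1 \<and> sin t*a1 + cos t*b1 = c2*q2 - c1*q1
     \<and> cos t*a2 - sin t*b2 = c3*p3 - c1*p1 \<and> sin t*a2 + cos t*b2 = c3*q3 - c1*q1"
proof -
  define d12 where "d12 = p1*q2 - q1*p2"
  define d13 where "d13 = p1*q3 - q1*p3"
  define al where "al = d12*(q3*a2 - p3*b2) + d13*(p2*b1 - q2*a1)"
  define be where "be = d12*(-q3*b2 - p3*a2) + d13*(p2*a1 + q2*b1)"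
  obtain t where t: "al * cos t + be * sin t = 0" using trig_root by blast
  define z1 where "z1 = cos t*a1 - sin t*b1"
  define z2 where "z2 = sin t*a1 + cos t*b1"
  define z3 where "z3 = cos t*a2 - sin t*b2"
  define z4 where "z4 = sin t*a2 + cos t*b2"
  have dne: "d12 \<noteq> 0" using d d12_def by simp
  define c1 where "c1 = (p2*z2 - q2*z1)/d12"
  define c2 where "c2 = (p1*z2 - q1*z1)/d12"
  have F: "d12*(z3*q3 - z4*p3) + d13*(p2*z2 - q2*z1) = 0"
  proof -
    have "d12*(z3*q3 - z4*p3) + d13*(p2*z2 - q2*z1) = al * cos t + be * sin t"
      unfolding al_def be_def z1_def z2_def z3_def z4_def by (simp add: algebra_simps)
    then show ?thesis using t by simp
  qed
  have par: "(z3 + c1*p1)*q3 = (z4 + c1*q1)*p3"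
  proof -
    have "d12 * ((z3 + c1*p1)*q3 - (z4 + c1*q1)*p3) = d12*(z3*q3 - z4*p3) + d13*(p2*z2 - q2*z1)"
      unfolding c1_def d13_def using dne by (simp add: field_simps)
    then show ?thesis using F dne by simp
  qed
  define c3 where "c3 = (if p3 \<noteq> 0 then (z3 + c1*p1)/p3 else (z4 + c1*q1)/q3)"
  have e3: "z3 = c3*p3 - c1*p1" and e4: "z4 = c3*q3 - c1*q1"
  proof -
    show "z3 = c3*p3 - c1*p1"
    proof (cases "p3 = 0")
      case True then have "q3 \<noteq> 0" using n3 by simp
      then show ?thesis using par True by (simp add: c3_def)
    next
      case False then show ?thesis by (simp add: c3_def)
    qed
    show "z4 = c3*q3 - c1*q1"
    proof (cases "p3 = 0")
      case True then have "q3 \<noteq> 0" using n3 by simp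
      then show ?thesis using par True by (simp add: c3_def)
    next
      case False
      have "z4 * p3 = ((z3 + c1*p1)/p3 * q3 - c1*q1) * p3" using par False by (simp add: field_simps)
      then show ?thesis using False by (simp add: c3_def)
    qed
  qed
  have e1: "z1 = c2*p2 - c1*p1"
  proof -
    have "c2*p2 - c1*p1 = ((p1*z2 - q1*z1)*p2 - (p2*z2 - q2*z1)*p1)/d12"
      using dne unfolding c1_def c2_def by (simp add: field_simps)
    also have "(p1*z2 - q1*z1)*p2 - (p2*z2 - q2*z1)*p1 = z1 * d12" unfolding d12_def by (simp add: algebra_simps)
    finally show ?thesis using dne by simp
  qed
  have e2: "z2 = c2*q2 - c1*q1"
  proof -
    have "c2*q2 - c1*q1 = ((p1*z2 - q1*z1)*q2 - (p2*z2 - q2*z1)*q1)/d12"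
      using dne unfolding c1_def c2_def by (simp add: field_simps)
    also have "(p1*z2 - q1*z1)*q2 - (p2*z2 - q2*z1)*q1 = z2 * d12" unfolding d12_def by (simp add: algebra_simps)
    finally show ?thesis using dne by simp
  qed
  show ?thesis using e1 e2 e3 e4 unfolding z1_def z2_def z3_def z4_def by blast
qed

definition Rot :: "'v::real_inner \<Rightarrow> 'v \<Rightarrow> real \<Rightarrow> 'v \<Rightarrow> 'v" where
 "Rot e f t x = x + ((cos t - 1) * (x \<bullet> e) - sin t * (x \<bullet> f)) *\<^sub>R e
                  + ((cos t - 1) * (x \<bullet> f) + sin t * (x \<bullet> e)) *\<^sub>R f"

definition orthon :: "'v::real_inner \<Rightarrow> 'v \<Rightarrow> bool" where
 "orthon e f \<longleftrightarrow> e \<bullet> e = 1 \<and> f \<bullet> f = 1 \<and> e \<bullet> f = 0"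

lemma Rot_zero[simp]: "Rot e f 0 x = x"
  by (simp add: Rot_def)

lemma Rot_fix: "x \<bullet> e = 0 \<Longrightarrow> x \<bullet> f = 0 \<Longrightarrow> Rot e f t x = x"
  by (simp add: Rot_def)

lemma Rot_linear: "linear (Rot e f t)"
  by (rule linearI) (simp_all add: Rot_def inner_add_left algebra_simps scaleR_add_left)

lemma Rot_e: "orthon e f \<Longrightarrow> (Rot e f t x) \<bullet> e = cos t * (x \<bullet> e) - sin t * (x \<bullet> f)"
  by (simp add: Rot_def orthon_def inner_add_left inner_commute algebra_simps)

lemma Rot_f: "orthon e f \<Longrightarrow> (Rot e f t x) \<bullet> f = sin t * (x \<bullet> e) + cos t * (x \<bullet> f)"
  by (simp add: Rot_def orthon_def inner_add_left inner_commute algebra_simps)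

lemma regroup: "(x + A *\<^sub>R e + B *\<^sub>R f) + A' *\<^sub>R e + B' *\<^sub>R f = x + (A+A') *\<^sub>R e + (B+B') *\<^sub>R (f::'v::real_vector)"
  by (simp add: algebra_simps)

lemma Rot_comp: assumes "orthon e f" shows "Rot e f a (Rot e f b x) = Rot e f (a + b) x"
proof -
  define p where "p = x \<bullet> e" define q where "q = x \<bullet> f"
  have "Rot e f a (Rot e f b x) = Rot e f b x + ((cos a - 1) * (cos b * p - sin b * q) - sin a * (sin b * p + cos b * q)) *\<^sub>R e
                  + ((cos a - 1) * (sin b * p + cos b * q) + sin a * (cos b * p - sin b * q)) *\<^sub>R f"
    unfolding Rot_def[of e f a] Rot_e[OF assms] Rot_f[OF assms] p_def q_def by simp
  also have "\<dots> = x + ((cos b - 1) * p - sin b * q + ((cos a - 1) * (cos b * p - sin b * q) - sin a * (sin b * p + cos b * q))) *\<^sub>R e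
       + ((cos b - 1) * q + sin b * p + ((cos a - 1) * (sin b * p + cos b * q) + sin a * (cos b * p - sin b * q))) *\<^sub>R f"
    unfolding Rot_def[of e f b] p_def[symmetric] q_def[symmetric] by (rule regroup)
  also have "\<dots> = Rot e f (a + b) x"
    unfolding Rot_def[of e f "a+b"] p_def[symmetric] q_def[symmetric] cos_add sin_add
    by (simp add: algebra_simps)
  finally show ?thesis .
qed

lemma Rot_plane: assumes "orthon e f"
  shows "Rot e f t (a *\<^sub>R e + b *\<^sub>R f) = (cos t * a - sin t * b) *\<^sub>R e + (sin t * a + cos t * b) *\<^sub>R f"
  using assms unfolding Rot_def orthon_def
  by (simp add: inner_add_left inner_commute scaleR_add_left scaleR_diff_left algebra_simps)

lemma Rot_norm: assumes "orthon e f" shows "norm (Rot e f t x) = norm x"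
proof -
  have "(Rot e f t x) \<bullet> (Rot e f t x) = x \<bullet> x"
  proof -
    have s: "sin t ^ 2 + cos t ^ 2 = 1" by simp
    define a where "a = x \<bullet> e" define b where "b = x \<bullet> f"
    have "(Rot e f t x) \<bullet> (Rot e f t x) = x \<bullet> x + 2 * ((cos t - 1) * a - sin t * b) * a + 2 * ((cos t - 1) * b + sin t * a) * b
       + ((cos t - 1) * a - sin t * b)^2 + ((cos t - 1) * b + sin t * a)^2"
      using assms unfolding Rot_def orthon_def a_def b_def
      by (simp add: inner_add_left inner_add_right inner_commute algebra_simps power2_eq_square)
    also have "\<dots> = x \<bullet> x"
    proof -
      have cs: "cos t * cos t = 1 - sin t * sin t" using s by (simp add: power2_eq_square)
      show ?thesis by (simp add: algebra_simps power2_eq_square cs)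
    qed
    finally show ?thesis .
  qed
  then show ?thesis by (simp add: norm_eq_sqrt_inner)
qed


fun rcomp :: "('v::real_inner \<times> 'v \<times> real) list \<Rightarrow> 'v \<Rightarrow> 'v" where
  "rcomp [] x = x"
| "rcomp ((e,f,t)#l) x = Rot e f t (rcomp l x)"

definition okl :: "('v::real_inner \<times> 'v \<times> real) list \<Rightarrow> bool" where
  "okl l \<longleftrightarrow> list_all (\<lambda>(e,f,t). orthon e f) l"

lemma okl_simps[simp]: "okl []" "okl ((e,f,t)#l) \<longleftrightarrow> orthon e f \<and> okl l" "okl (l1 @ l2) \<longleftrightarrow> okl l1 \<and> okl l2"
  by (simp_all add: okl_def)

lemma rcomp_append: "rcomp (l1 @ l2) x = rcomp l1 (rcomp l2 x)"
  by (induction l1 arbitrary: x) auto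

lemma rcomp_linear: "linear (rcomp l)"
proof (induction l)
  case Nil then show ?case by (simp add: linear_id[unfolded id_def])
next
  case (Cons a l)
  obtain e f t where a: "a = (e,f,t)" by (cases a)
  have "linear (Rot e f t \<circ> rcomp l)" by (rule linear_compose[OF Cons.IH Rot_linear])
  then show ?case by (simp add: a o_def)
qed

definition rinv :: "('v::real_inner \<times> 'v \<times> real) list \<Rightarrow> ('v \<times> 'v \<times> real) list" where
  "rinv l = rev (map (\<lambda>(e,f,t). (e,f,-t)) l)"

lemma rinv_ok: "okl l \<Longrightarrow> okl (rinv l)"
  by (induction l) (auto simp: okl_def rinv_def)

lemma rinv_cancel: "okl l \<Longrightarrow> rcomp (rinv l) (rcomp l x) = x"
proof (induction l arbitrary: x)
  case Nil then show ?case by (simp add: rinv_def)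
next
  case (Cons a l)
  obtain e f t where a: "a = (e,f,t)" by (cases a)
  have o: "orthon e f" "okl l" using Cons.prems a by auto
  have "rinv (a#l) = rinv l @ [(e,f,-t)]" by (simp add: rinv_def a)
  then have "rcomp (rinv (a#l)) (rcomp (a#l) x) = rcomp (rinv l) (Rot e f (-t) (Rot e f t (rcomp l x)))"
    by (simp add: rcomp_append a)
  also have "\<dots> = rcomp (rinv l) (rcomp l x)" by (simp add: Rot_comp[OF o(1)])
  also have "\<dots> = x" using Cons.IH o(2) by simp
  finally show ?case .
qed

lemma into_line:
  fixes t x :: "'v::euclidean_space"
  assumes tn: "norm t = 1"
  shows "\<exists>l. okl l \<and> rcomp l x \<in> span {t} \<and> (\<forall>z. z \<bullet> x = 0 \<longrightarrow> z \<bullet> t = 0 \<longrightarrow> rcomp l z = z)"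
proof (cases "x \<in> span {t}")
  case True then show ?thesis by (intro exI[of _ "[]"]) auto
next
  case False
  then have x0: "x \<noteq> 0" using span_zero by auto
  have tt: "t \<bullet> t = 1" using tn by (simp add: norm_eq_1)
  define w where "w = x /\<^sub>R norm x"
  have ww: "w \<bullet> w = 1" using x0 unfolding w_def by (simp add: inner_commute dot_square_norm power2_eq_square)
  have xw: "x = norm x *\<^sub>R w" using x0 unfolding w_def by simp
  define g0 where "g0 = t - (t \<bullet> w) *\<^sub>R w"
  have g0g0: "g0 \<bullet> g0 = 1 - (t \<bullet> w)^2"
    unfolding g0_def using tt ww by (simp add: inner_diff_left inner_diff_right inner_commute power2_eq_square)
  have g0ne: "g0 \<noteq> 0"
  proof
    assume g: "g0 = 0"
    then have tw2: "(t \<bullet> w)^2 = 1" using g0g0 by simp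
    then have twne: "t \<bullet> w \<noteq> 0" by auto
    have "t = (t \<bullet> w) *\<^sub>R w" using g unfolding g0_def by simp
    then have "(1 / (t \<bullet> w)) *\<^sub>R t = w" using twne by (metis scaleR_scaleR divide_self_if scaleR_one times_divide_eq_left mult_1)
    then have "x = norm x *\<^sub>R ((1 / (t \<bullet> w)) *\<^sub>R t)" using xw by simp
    then have "x = (norm x / (t \<bullet> w)) *\<^sub>R t" by simp
    then have "x \<in> span {t}" by (metis span_base span_scale singletonI)
    then show False using False by simp
  qed
  have ng0: "norm g0 ^2 = 1 - (t \<bullet> w)^2" using g0g0 by (simp add: power2_norm_eq_inner)
  define g where "g = g0 /\<^sub>R norm g0"
  have gg: "g \<bullet> g = 1" using g0ne unfolding g_def by (simp add: dot_square_norm power2_eq_square)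
  have wg: "w \<bullet> g = 0" unfolding g_def g0_def using ww by (simp add: inner_diff_right inner_commute)
  have o: "orthon w g" using ww gg wg by (simp add: orthon_def)
  have "(t \<bullet> w)^2 + (norm g0)^2 = 1" using ng0 by simp
  then obtain th where c: "t \<bullet> w = cos th" and s: "norm g0 = sin th" by (rule sincos_total_2pi) auto
  have Rw: "Rot w g th w = t"
  proof -
    have "Rot w g th (1 *\<^sub>R w + 0 *\<^sub>R g) = cos th *\<^sub>R w + sin th *\<^sub>R g" using Rot_plane[OF o, of th 1 0] by simp
    also have "\<dots> = (t \<bullet> w) *\<^sub>R w + g0" unfolding c[symmetric] s[symmetric] g_def using g0ne by simp
    also have "\<dots> = t" unfolding g0_def by simp
    finally show ?thesis by simp
  qed
  have "Rot w g th x = norm x *\<^sub>R t"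
    using Rw xw linear_cmul[OF Rot_linear, of w g th "norm x" w] by simp
  then have inl: "Rot w g th x \<in> span {t}" by (simp add: span_base span_scale)
  have fx: "Rot w g th z = z" if "z \<bullet> x = 0" "z \<bullet> t = 0" for z
  proof (rule Rot_fix)
    show "z \<bullet> w = 0" using that unfolding w_def by simp
    show "z \<bullet> g = 0" using that unfolding g_def g0_def w_def by (simp add: inner_diff_right)
  qed
  show ?thesis by (intro exI[of _ "[(w,g,th)]"]) (use o inl fx in auto)
qed

lemma par_coord:
  fixes p1 q1 p2 q2 :: real
  assumes "p1 \<noteq> 0 \<or> q1 \<noteq> 0" "p1*q2 - q1*p2 = 0"
  shows "\<exists>t. p2 = t*p1 \<and> q2 = t*q1"
proof -
  have pos: "p1*p1 + q1*q1 \<noteq> 0" using assms(1) sum_squares_gt_zero_iff[of p1 q1] by linarith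
  define t where "t = (p1*p2 + q1*q2)/(p1*p1 + q1*q1)"
  have e: "p1*q2 = q1*p2" using assms(2) by simp
  have "p2 * (p1*p1 + q1*q1) - (p1*p2 + q1*q2) * p1 = q1*(q1*p2 - p1*q2)" by (simp add: algebra_simps)
  then have "p2 * (p1*p1 + q1*q1) = (p1*p2 + q1*q2) * p1" using e by simp
  moreover have "q2 * (p1*p1 + q1*q1) - (p1*p2 + q1*q2) * q1 = p1*(p1*q2 - q1*p2)" by (simp add: algebra_simps)
  then have "q2 * (p1*p1 + q1*q1) = (p1*p2 + q1*q2) * q1" using e by simp
  ultimately have "p2 = t*p1 \<and> q2 = t*q1" using pos unfolding t_def by (simp add: field_simps)
  then show ?thesis by blast
qed

lemma two_coords:
  fixes e f x :: "'v::real_inner"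
  assumes "x \<in> span {e, f}"
  shows "\<exists>a b. x = a *\<^sub>R e + b *\<^sub>R f"
proof -
  obtain a where "x - a *\<^sub>R e \<in> span {f}" using assms span_breakdown_eq by blast
  then obtain b where "x - a *\<^sub>R e = b *\<^sub>R f" by (auto simp: span_singleton)
  then show ?thesis by (metis diff_eq_eq add.commute)
qed

lemma planar_lift:
  fixes e f :: "'v::real_inner"
  assumes o: "orthon e f"
    and "cos t*a1 - sin t*b1 = c2*p2 - c1*p1" "sin t*a1 + cos t*b1 = c2*q2 - c1*q1"
  shows "Rot e f t (a1 *\<^sub>R e + b1 *\<^sub>R f) = c2 *\<^sub>R (p2 *\<^sub>R e + q2 *\<^sub>R f) - c1 *\<^sub>R (p1 *\<^sub>R e + q1 *\<^sub>R f)"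
proof -
  have "Rot e f t (a1 *\<^sub>R e + b1 *\<^sub>R f) = (c2*p2 - c1*p1) *\<^sub>R e + (c2*q2 - c1*q1) *\<^sub>R f"
    using Rot_plane[OF o] assms(2,3) by simp
  also have "\<dots> = c2 *\<^sub>R (p2 *\<^sub>R e + q2 *\<^sub>R f) - c1 *\<^sub>R (p1 *\<^sub>R e + q1 *\<^sub>R f)"
    by (simp add: algebra_simps)
  finally show ?thesis .
qed

lemma core_geom:
  fixes u1 u2 u3 U V :: "'v::euclidean_space"
  assumes nz: "u1 \<noteq> 0" "u2 \<noteq> 0" "u3 \<noteq> 0" and d2: "dim {u1,u2,u3} = 2"
  shows "\<exists>l c1 c2 c3. okl l \<and> rcomp l (c2 *\<^sub>R u2 - c1 *\<^sub>R u1) = U \<and> rcomp l (c3 *\<^sub>R u3 - c1 *\<^sub>R u1) = V"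
proof -
  let ?P = "span {u1,u2,u3}"
  obtain B where B: "B \<subseteq> ?P" "pairwise orthogonal B" "\<And>x. x \<in> B \<Longrightarrow> norm x = 1"
     "independent B" "card B = dim ?P" "span B = ?P"
    using orthonormal_basis_subspace[OF subspace_span] by metis
  have "card B = 2" using B(5) d2 by simp
  then obtain e f where ef: "B = {e,f}" "e \<noteq> f" by (auto simp: card_2_iff)
  have ne: "norm e = 1" and nf: "norm f = 1" using B(3) ef by auto
  have o: "orthon e f" unfolding orthon_def using ne nf B(2) ef
    by (auto simp: norm_eq_1 pairwise_def orthogonal_def)
  have inP: "\<exists>a b. x = a *\<^sub>R e + b *\<^sub>R f" if "x \<in> ?P" for x
    using two_coords[of x e f] that B(6) ef by simp
  obtain p1 q1 where u1: "u1 = p1 *\<^sub>R e + q1 *\<^sub>R f" using inP[of u1] by (auto intro: span_base)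
  obtain p2 q2 where u2: "u2 = p2 *\<^sub>R e + q2 *\<^sub>R f" using inP[of u2] by (auto intro: span_base)
  obtain p3 q3 where u3: "u3 = p3 *\<^sub>R e + q3 *\<^sub>R f" using inP[of u3] by (auto intro: span_base)
  have pq1: "p1 \<noteq> 0 \<or> q1 \<noteq> 0" using nz(1) u1 by auto
  have pq2: "p2 \<noteq> 0 \<or> q2 \<noteq> 0" using nz(2) u2 by auto
  have pq3: "p3 \<noteq> 0 \<or> q3 \<noteq> 0" using nz(3) u3 by auto
  obtain l1 where l1: "okl l1" "rcomp l1 U \<in> span {e}" using into_line[OF ne, of U] by blast
  obtain al where al: "rcomp l1 U = al *\<^sub>R e" using l1(2) by (auto simp: span_singleton)
  define V1 where "V1 = rcomp l1 V"
  define W where "W = V1 - (V1 \<bullet> e) *\<^sub>R e"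
  have We: "e \<bullet> W = 0" unfolding W_def using o by (simp add: orthon_def inner_diff_right inner_commute)
  obtain l2 where l2: "okl l2" "rcomp l2 W \<in> span {f}" "\<And>z. z \<bullet> W = 0 \<Longrightarrow> z \<bullet> f = 0 \<Longrightarrow> rcomp l2 z = z"
    using into_line[OF nf, of W] by blast
  obtain be where be: "rcomp l2 W = be *\<^sub>R f" using l2(2) by (auto simp: span_singleton)
  have l2e: "rcomp l2 e = e" using l2(3)[of e] We o by (simp add: orthon_def)
  have lin2: "linear (rcomp l2)" by (rule rcomp_linear)
  have AU: "rcomp (l2 @ l1) U = al *\<^sub>R e + 0 *\<^sub>R f"
    using al l2e linear_cmul[OF lin2] by (simp add: rcomp_append)
  have "rcomp l2 V1 = rcomp l2 W + (V1 \<bullet> e) *\<^sub>R rcomp l2 e"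
    unfolding W_def using linear_diff[OF lin2] linear_cmul[OF lin2] by simp
  then have AV: "rcomp (l2 @ l1) V = (V1 \<bullet> e) *\<^sub>R e + be *\<^sub>R f"
    using be l2e by (simp add: rcomp_append V1_def[symmetric])
  define a2 where "a2 = V1 \<bullet> e"
  have "\<exists>t c1 c2 c3. cos t*al - sin t*0 = c2*p2 - c1*p1 \<and> sin t*al + cos t*0 = c2*q2 - c1*q1
     \<and> cos t*a2 - sin t*be = c3*p3 - c1*p1 \<and> sin t*a2 + cos t*be = c3*q3 - c1*q1"
  proof (cases "p1*q2 - q1*p2 = 0")
    case False
    then show ?thesis using planar_core[OF pq3 False] by blast
  next
    case True
    have "p1*q3 - q1*p3 \<noteq> 0"
    proof
      assume T3: "p1*q3 - q1*p3 = 0"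
      obtain s2 where "p2 = s2*p1 \<and> q2 = s2*q1" using par_coord[OF pq1 True] by blast
      then have "u2 = s2 *\<^sub>R u1" using u1 u2 by (simp add: algebra_simps)
      moreover obtain s3 where "p3 = s3*p1 \<and> q3 = s3*q1" using par_coord[OF pq1 T3] by blast
      then have "u3 = s3 *\<^sub>R u1" using u1 u3 by (simp add: algebra_simps)
      ultimately have "{u1,u2,u3} \<subseteq> span {u1}" by (auto intro: span_base span_scale)
      then have "dim {u1,u2,u3} \<le> card {u1}" by (rule dim_le_card) simp
      then show False using d2 by simp
    qed
    then have "\<exists>t c1 c3 c2. cos t*a2 - sin t*be = c3*p3 - c1*p1 \<and> sin t*a2 + cos t*be = c3*q3 - c1*q1
       \<and> cos t*al - sin t*0 = c2*p2 - c1*p1 \<and> sin t*al + cos t*0 = c2*q2 - c1*q1"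
      by (intro planar_core pq2)
    then show ?thesis by blast
  qed
  then obtain t c1 c2 c3 where pc: "cos t*al - sin t*0 = c2*p2 - c1*p1" "sin t*al + cos t*0 = c2*q2 - c1*q1"
     "cos t*a2 - sin t*be = c3*p3 - c1*p1" "sin t*a2 + cos t*be = c3*q3 - c1*q1" by blast
  define l where "l = (e,f,t) # (l2 @ l1)"
  have okl: "okl l" using o l1(1) l2(1) by (simp add: l_def)
  have LU: "rcomp l U = c2 *\<^sub>R u2 - c1 *\<^sub>R u1"
    unfolding l_def u1 u2 using AU planar_lift[OF o pc(1,2)] by simp
  have LV: "rcomp l V = c3 *\<^sub>R u3 - c1 *\<^sub>R u1"
    unfolding l_def u1 u3 using AV planar_lift[OF o pc(3,4)] by (simp add: a2_def)
  show ?thesis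
    using rinv_ok[OF okl] rinv_cancel[OF okl, of U] rinv_cancel[OF okl, of V] LU LV by metis
qed

lemma matrix_add_rdistrib': "((A::'a::semiring_1^'n^'m) + B) ** C = (A ** C) + (B ** C)"
  by (vector matrix_matrix_mult_def sum.distrib[symmetric] field_simps)

lemma matrix_inv_props:
  assumes "invertible (k::'a::semiring_1^'n^'n)"
  shows "k ** matrix_inv k = mat 1" "matrix_inv k ** k = mat 1"
proof -
  have "\<exists>A'. k ** A' = mat 1 \<and> A' ** k = mat 1" using assms by (simp add: invertible_def)
  then have "k ** matrix_inv k = mat 1 \<and> matrix_inv k ** k = mat 1"
    unfolding matrix_inv_def by (rule someI_ex)
  then show "k ** matrix_inv k = mat 1" "matrix_inv k ** k = mat 1" by auto
qed

lemma matrix_inv_eq: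
  fixes k :: "'a::comm_ring_1^'n^'n"
  assumes "k ** B = mat 1" "B ** k = mat 1"
  shows "matrix_inv k = B"
proof -
  have inv: "invertible k" using assms invertible_def by blast
  have "matrix_inv k = matrix_inv k ** (k ** B)" using assms by simp
  also have "\<dots> = B" by (simp add: matrix_mul_assoc matrix_inv_props[OF inv])
  finally show ?thesis .
qed

lemma Ad_add: "Ad k (X + Y) = Ad k X + Ad k Y"
  by (simp add: Ad_def matrix_add_ldistrib matrix_add_rdistrib')

lemma Ad_scaleR: "Ad k (c *\<^sub>R X) = c *\<^sub>R Ad k X"
  by (simp add: Ad_def matrix_scalar_ac scalar_matrix_assoc)

lemma Ad_zero[simp]: "Ad k 0 = 0"
  by (simp add: Ad_def)

lemma Ad_diff: "Ad k (X - Y) = Ad k X - Ad k Y"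
  using Ad_add[of k "X - Y" Y] by (simp add: algebra_simps)

lemma Ad_inj:
  assumes "invertible k" "Ad k X = Ad k Y"
  shows "X = Y"
proof -
  let ?M = "matrix_inv k"
  have "?M ** (k ** X ** ?M) ** k = ?M ** (k ** Y ** ?M) ** k" using assms(2) by (simp add: Ad_def)
  then have "X ** ?M ** k = Y ** ?M ** k" by (simp add: matrix_mul_assoc matrix_inv_props[OF assms(1)])
  then have "X ** (?M ** k) = Y ** (?M ** k)" by (simp only: matrix_mul_assoc)
  then show ?thesis by (simp add: matrix_inv_props[OF assms(1)])
qed

lemma span3: "span {a, b, c} = {x. \<exists>c1 c2 c3. x = c1 *\<^sub>R a + c2 *\<^sub>R b + c3 *\<^sub>R (c::'v::real_vector)}"
proof -
  have "x \<in> span {a,b,c} \<longleftrightarrow> (\<exists>c1 c2 c3. x = c1 *\<^sub>R a + c2 *\<^sub>R b + c3 *\<^sub>R c)" for x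
  proof
    assume "x \<in> span {a,b,c}"
    then obtain k1 where "x - k1 *\<^sub>R a \<in> span {b, c}" using span_breakdown_eq by blast
    then obtain k2 where "x - k1 *\<^sub>R a - k2 *\<^sub>R b \<in> span {c}" using span_breakdown_eq by blast
    then obtain k3 where "x - k1 *\<^sub>R a - k2 *\<^sub>R b = k3 *\<^sub>R c" by (auto simp: span_singleton)
    then have "x = k1 *\<^sub>R a + k2 *\<^sub>R b + k3 *\<^sub>R c" by (simp add: algebra_simps)
    then show "\<exists>c1 c2 c3. x = c1 *\<^sub>R a + c2 *\<^sub>R b + c3 *\<^sub>R c" by blast
  next
    assume "\<exists>c1 c2 c3. x = c1 *\<^sub>R a + c2 *\<^sub>R b + c3 *\<^sub>R c"
    then show "x \<in> span {a,b,c}" by (auto intro!: span_add span_scale intro: span_base)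
  qed
  then show ?thesis by blast
qed

lemma max_abelian_line:
  fixes L :: "'v::euclidean_space \<Rightarrow> 'a::real_normed_field^'n^'n"
  assumes Llin: "linear L" and Linj: "inj L" and Lran: "range L = s0"
    and comm: "\<And>x y. L x ** L y - L y ** L x = 0 \<longleftrightarrow> (x = 0 \<or> (\<exists>c. y = c *\<^sub>R x))"
    and ma: "max_abelian s0 a"
  shows "\<exists>u. u \<noteq> 0 \<and> a = range (\<lambda>c. L (c *\<^sub>R u))"
proof -
  have L0: "L 0 = 0" using Llin by (simp add: linear_0)
  have Lz: "L x = 0 \<longleftrightarrow> x = 0" for x using Linj L0 by (metis injD)
  have Lsc: "L (c *\<^sub>R x) = c *\<^sub>R L x" for c x using Llin by (simp add: linear_scale)
  have Ladd: "L (x + y) = L x + L y" for x y using Llin by (simp add: linear_add)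
  have sub: "subspace a" and as0: "a \<subseteq> s0" and ab: "\<forall>X\<in>a. \<forall>Y\<in>a. X ** Y - Y ** X = 0"
    and mx: "\<And>b. subspace b \<Longrightarrow> a \<subseteq> b \<Longrightarrow> b \<subseteq> s0 \<Longrightarrow> (\<forall>X\<in>b. \<forall>Y\<in>b. X ** Y - Y ** X = 0) \<Longrightarrow> b = a"
    using ma unfolding max_abelian_def by blast+
  have line: "subspace (range (\<lambda>c. L (c *\<^sub>R u)))" "range (\<lambda>c. L (c *\<^sub>R u)) \<subseteq> s0"
       "\<forall>X\<in>range (\<lambda>c. L (c *\<^sub>R u)). \<forall>Y\<in>range (\<lambda>c. L (c *\<^sub>R u)). X ** Y - Y ** X = 0" for u
  proof -
    show "subspace (range (\<lambda>c. L (c *\<^sub>R u)))"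
      unfolding subspace_def
    proof (intro conjI ballI allI)
      show "0 \<in> range (\<lambda>c. L (c *\<^sub>R u))" using L0 by (auto intro!: image_eqI[of _ _ 0])
      fix x y assume "x \<in> range (\<lambda>c. L (c *\<^sub>R u))" "y \<in> range (\<lambda>c. L (c *\<^sub>R u))"
      then obtain c d where "x = L (c *\<^sub>R u)" "y = L (d *\<^sub>R u)" by auto
      then have "x + y = L ((c + d) *\<^sub>R u)" using Lsc Ladd by (simp add: scaleR_add_left)
      then show "x + y \<in> range (\<lambda>c. L (c *\<^sub>R u))" by blast
    next
      fix r x assume "x \<in> range (\<lambda>c. L (c *\<^sub>R u))"
      then obtain c where "x = L (c *\<^sub>R u)" by auto
      then have "r *\<^sub>R x = L ((r * c) *\<^sub>R u)" using Lsc by simp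
      then show "r *\<^sub>R x \<in> range (\<lambda>c. L (c *\<^sub>R u))" by blast
    qed
    show "range (\<lambda>c. L (c *\<^sub>R u)) \<subseteq> s0" using Lran by auto
    show "\<forall>X\<in>range (\<lambda>c. L (c *\<^sub>R u)). \<forall>Y\<in>range (\<lambda>c. L (c *\<^sub>R u)). X ** Y - Y ** X = 0"
    proof (intro ballI)
      fix X Y assume "X \<in> range (\<lambda>c. L (c *\<^sub>R u))" "Y \<in> range (\<lambda>c. L (c *\<^sub>R u))"
      then obtain c d where XY: "X = L (c *\<^sub>R u)" "Y = L (d *\<^sub>R u)" by auto
      show "X ** Y - Y ** X = 0"
      proof (cases "c = 0")
        case True then show ?thesis unfolding XY using comm by auto
      next
        case False
        have "d *\<^sub>R u = (d / c) *\<^sub>R (c *\<^sub>R u)" using False by simp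
        then show ?thesis unfolding XY using comm by blast
      qed
    qed
  qed
  have "\<exists>X\<in>a. X \<noteq> 0"
  proof (rule ccontr)
    assume "\<not> (\<exists>X\<in>a. X \<noteq> 0)"
    then have a0: "a \<subseteq> {0}" by auto
    obtain b0 :: 'v where b0: "b0 \<in> Basis" using nonempty_Basis by blast
    have b0nz: "b0 \<noteq> 0" using b0 by auto
    have "a \<subseteq> range (\<lambda>c. L (c *\<^sub>R b0))" using a0 L0 by (auto intro!: image_eqI[of _ _ 0])
    then have "range (\<lambda>c. L (c *\<^sub>R b0)) = a" using mx line[of b0] by blast
    then have "L (1 *\<^sub>R b0) \<in> a" by blast
    then show False using a0 b0nz Lz by auto
  qed
  then obtain X where X: "X \<in> a" "X \<noteq> 0" by blast
  then obtain u where u: "X = L u" using as0 Lran by auto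
  have unz: "u \<noteq> 0" using u X L0 by auto
  have "a = range (\<lambda>c. L (c *\<^sub>R u))"
  proof
    show "a \<subseteq> range (\<lambda>c. L (c *\<^sub>R u))"
    proof
      fix Y assume Y: "Y \<in> a"
      then obtain y where y: "Y = L y" using as0 Lran by auto
      have "L u ** L y - L y ** L u = 0" using ab X(1) Y u y by blast
      then obtain c where "y = c *\<^sub>R u" using comm unz by blast
      then show "Y \<in> range (\<lambda>c. L (c *\<^sub>R u))" using y by blast
    qed
    show "range (\<lambda>c. L (c *\<^sub>R u)) \<subseteq> a"
      using X(1) u Lsc subspace_scale[OF sub] by auto
  qed
  then show ?thesis using unz by blast
qed

lemma vec_id1: "(a *\<^sub>R x + b *\<^sub>R y) - (2*c) *\<^sub>R z = (a *\<^sub>R x - b *\<^sub>R y) - 2 *\<^sub>R (c *\<^sub>R z - b *\<^sub>R (y::'v::real_vector))"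
proof -
  have "(2::real) *\<^sub>R (b *\<^sub>R y) = b *\<^sub>R y + b *\<^sub>R y" by (rule scaleR_2)
  then show ?thesis by (simp add: scaleR_right_diff_distrib scaleR_scaleR algebra_simps)
qed

lemma realize:
  fixes L :: "'v::euclidean_space \<Rightarrow> 'a::real_normed_field^'n^'n"
  assumes Kid: "\<exists>k\<in>K0. \<forall>X. Ad k X = X"
    and Krot: "\<And>e f t. orthon e f \<Longrightarrow> \<exists>k\<in>K0. \<forall>x. Ad k (L x) = L (Rot e f t x)"
    and Kcomp: "\<And>k1 k2. k1 \<in> K0 \<Longrightarrow> k2 \<in> K0 \<Longrightarrow> \<exists>k\<in>K0. \<forall>X. Ad k X = Ad k1 (Ad k2 X)"
  shows "okl l \<Longrightarrow> \<exists>k\<in>K0. \<forall>x. Ad k (L x) = L (rcomp l x)"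
proof (induction l)
  case Nil then show ?case using Kid by (metis rcomp.simps(1))
next
  case (Cons a l)
  obtain e f t where a: "a = (e,f,t)" by (cases a)
  have o: "orthon e f" "okl l" using Cons.prems a by auto
  obtain k1 where k1: "k1 \<in> K0" "\<forall>x. Ad k1 (L x) = L (rcomp l x)" using Cons.IH o(2) by blast
  obtain k2 where k2: "k2 \<in> K0" "\<forall>x. Ad k2 (L x) = L (Rot e f t x)" using Krot[OF o(1)] by blast
  obtain k where k: "k \<in> K0" "\<forall>X. Ad k X = Ad k2 (Ad k1 X)" using Kcomp[OF k2(1) k1(1)] by blast
  show ?case using k k1 k2 a by (intro bexI[of _ k]) auto
qed

lemma generic:
  fixes L :: "'v::euclidean_space \<Rightarrow> 'a::real_normed_field^'n^'n"
    and s0 K0 :: "('a^'n^'n) set"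
  assumes dimv: "DIM('v) \<ge> 2"
    and Llin: "linear L" and Linj: "inj L" and Lran: "range L = s0"
    and comm: "\<And>x y. L x ** L y - L y ** L x = 0 \<longleftrightarrow> (x = 0 \<or> (\<exists>c. y = c *\<^sub>R x))"
    and Kinv: "\<And>k. k \<in> K0 \<Longrightarrow> invertible k"
    and Kpres: "\<And>k x. k \<in> K0 \<Longrightarrow> Ad k (L x) \<in> s0"
    and Kid: "\<exists>k\<in>K0. \<forall>X. Ad k X = X"
    and Krot: "\<And>e f t. orthon e f \<Longrightarrow> \<exists>k\<in>K0. \<forall>x. Ad k (L x) = L (Rot e f t x)"
    and Kcomp: "\<And>k1 k2. k1 \<in> K0 \<Longrightarrow> k2 \<in> K0 \<Longrightarrow> \<exists>k\<in>K0. \<forall>X. Ad k X = Ad k1 (Ad k2 X)"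
  shows "lemma_for s0 K0"
  unfolding lemma_for_def
proof (intro allI impI)
  fix a1 a2 a3 assume ma: "max_abelian s0 a1 \<and> max_abelian s0 a2 \<and> max_abelian s0 a3"
  have L0: "L 0 = 0" using Llin by (simp add: linear_0)
  have Lz: "L x = 0 \<longleftrightarrow> x = 0" for x using Linj L0 by (metis injD)
  have Lsc: "L (c *\<^sub>R x) = c *\<^sub>R L x" for c x using Llin by (simp add: linear_scale)
  have Ladd: "L (x + y) = L x + L y" for x y using Llin by (simp add: linear_add)
  have Ldiff: "L (x - y) = L x - L y" for x y using Llin by (simp add: linear_diff)
  obtain u1 where u1: "u1 \<noteq> 0" "a1 = range (\<lambda>c. L (c *\<^sub>R u1))"
    using max_abelian_line[OF Llin Linj Lran comm] ma by blast
  obtain u2 where u2: "u2 \<noteq> 0" "a2 = range (\<lambda>c. L (c *\<^sub>R u2))"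
    using max_abelian_line[OF Llin Linj Lran comm] ma by blast
  obtain u3 where u3: "u3 \<noteq> 0" "a3 = range (\<lambda>c. L (c *\<^sub>R u3))"
    using max_abelian_line[OF Llin Linj Lran comm] ma by blast
  have S3: "sum3 a1 a2 a3 = L ` span {u1,u2,u3}"
  proof -
    have "sum3 a1 a2 a3 = {L (c1 *\<^sub>R u1) + L (c2 *\<^sub>R u2) + L (c3 *\<^sub>R u3) | c1 c2 c3. True}"
      unfolding sum3_def u1 u2 u3 by blast
    also have "\<dots> = {L (c1 *\<^sub>R u1 + c2 *\<^sub>R u2 + c3 *\<^sub>R u3) | c1 c2 c3. True}"
      by (simp only: Ladd)
    also have "\<dots> = L ` span {u1,u2,u3}" unfolding span3 by blast
    finally show ?thesis .
  qed
  have dimeq: "dim (sum3 a1 a2 a3) = dim {u1,u2,u3}"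
  proof -
    have "inj_on L (span (span {u1,u2,u3}))" using inj_on_subset[OF Linj subset_UNIV] .
    then have "dim (L ` span {u1,u2,u3}) = dim (span {u1,u2,u3})" by (rule dim_image_eq[OF Llin])
    then show ?thesis unfolding S3 by simp
  qed
  define RHS where "RHS = {(Ad k X1 + T, Ad k X2 + T, Ad k X3 + T) | k X1 X2 X3 T.
          k \<in> K0 \<and> X1 \<in> a1 \<and> X2 \<in> a2 \<and> X3 \<in> a3 \<and> T \<in> s0}"
  have dh: "decomp_holds s0 K0 a1 a2 a3 \<longleftrightarrow> s0 \<times> s0 \<times> s0 = RHS"
    unfolding decomp_holds_def RHS_def by simp
  have s0add: "X \<in> s0 \<Longrightarrow> Y \<in> s0 \<Longrightarrow> X + Y \<in> s0" for X Y
    using Lran Ladd by (metis rangeE rangeI)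
  have RHSsub: "RHS \<subseteq> s0 \<times> s0 \<times> s0"
    unfolding RHS_def u1 u2 u3 using Kpres s0add by auto
  have mem: "\<exists>k\<in>K0. \<exists>c1 c2 c3. \<exists>T\<in>s0. Y1 = Ad k (L (c1 *\<^sub>R u1)) + T \<and> Y2 = Ad k (L (c2 *\<^sub>R u2)) + T
               \<and> Y3 = Ad k (L (c3 *\<^sub>R u3)) + T" if "(Y1,Y2,Y3) \<in> RHS" for Y1 Y2 Y3
    using that unfolding RHS_def u1 u2 u3 by blast
  have dle3: "dim {u1,u2,u3} \<le> 3"
  proof -
    have "card {u1,u2,u3} \<le> 3" by (auto simp: card_insert_if)
    then show ?thesis using dim_le_card'[of "{u1,u2,u3}"] by simp
  qed
  have dim_red: "x \<in> span S \<Longrightarrow> dim (insert x S) = dim S" for x and S :: "'v set"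
  proof -
    assume "x \<in> span S"
    then have "span (insert x S) = span S" by (rule span_redundant)
    then have "dim (span (insert x S)) = dim (span S)" by simp
    then show "dim (insert x S) = dim S" by (simp only: dim_span)
  qed
  have Adc: "Ad k (L (c *\<^sub>R u)) = c *\<^sub>R Ad k (L u)" for k c u by (simp add: Lsc Ad_scaleR)
  show "decomp_holds s0 K0 a1 a2 a3 \<longleftrightarrow> dim (sum3 a1 a2 a3) = 2"
    unfolding dh dimeq
  proof
    assume eq: "s0 \<times> s0 \<times> s0 = RHS"
    have inR: "(L x, L y, L z) \<in> RHS" for x y z
    proof -
      have "(L x, L y, L z) \<in> s0 \<times> s0 \<times> s0" using Lran by blast
      then show ?thesis using eq by simp
    qed
    show "dim {u1,u2,u3} = 2"
    proof (rule ccontr)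
      assume dn2: "dim {u1,u2,u3} \<noteq> 2"
      have "dim {u1} \<le> dim {u1,u2,u3}" by (rule dim_subset) auto
      then have d1: "dim {u1,u2,u3} \<ge> 1" using u1(1) by simp
      obtain S :: "'v set" where S: "S \<subseteq> Basis" "card S = 2"
        using obtain_subset_with_card_n[OF dimv] by blast
      obtain b1 b2 where b12S: "S = {b1,b2}" "b1 \<noteq> b2" using S(2) card_2_iff[of S] by auto
      have b: "b1 \<in> Basis" "b2 \<in> Basis" "b1 \<noteq> b2" using S(1) b12S by auto
      have bnz: "b1 \<noteq> 0" "b2 \<noteq> 0" using b by auto
      have b12: "b2 \<bullet> b1 = 0" "b1 \<bullet> b1 = 1" using b by (auto simp: inner_not_same_Basis)
      consider "dim {u1,u2,u3} = 1" | "dim {u1,u2,u3} = 3" using d1 dle3 dn2 by linarith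
      then show False
      proof cases
        case 1
        have "span {u1} = span {u1,u2,u3}" by (rule dim_eq_span) (use 1 u1(1) in auto)
        then have "u2 \<in> span {u1}" "u3 \<in> span {u1}" by (auto intro: span_base)
        then obtain s2 s3 where s: "u2 = s2 *\<^sub>R u1" "u3 = s3 *\<^sub>R u1" by (auto simp: span_singleton)
        obtain k c1 c2 c3 T where kc: "k \<in> K0" "T \<in> s0"
          "L 0 = Ad k (L (c1 *\<^sub>R u1)) + T" "L b1 = Ad k (L (c2 *\<^sub>R u2)) + T" "L b2 = Ad k (L (c3 *\<^sub>R u3)) + T"
          using mem[OF inR[of 0 b1 b2]] by blast
        define M where "M = Ad k (L u1)"
        have e1: "L b1 = (c2 * s2 - c1) *\<^sub>R M" using kc(3,4) unfolding s M_def Adc L0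
          by (simp add: algebra_simps scaleR_diff_left)
        have e2: "L b2 = (c3 * s3 - c1) *\<^sub>R M" using kc(3,5) unfolding s M_def Adc L0
          by (simp add: algebra_simps scaleR_diff_left)
        show False
        proof (cases "c2 * s2 - c1 = 0")
          case True then show False using e1 Lz bnz by simp
        next
          case False
          define r where "r = (c3 * s3 - c1) / (c2 * s2 - c1)"
          have "L b2 = r *\<^sub>R L b1" using e1 e2 False unfolding r_def by simp
          then have "L b2 = L (r *\<^sub>R b1)" by (simp add: Lsc)
          then have "b2 = r *\<^sub>R b1" using Linj by (simp add: inj_eq)
          then have "b2 \<bullet> b1 = r" using b12 by simp
          then have "r = 0" using b12 by simp
          then show False using \<open>b2 = r *\<^sub>R b1\<close> bnz by simp
        qed
      next
        case 2
        obtain k c1 c2 c3 T where kc: "k \<in> K0" "T \<in> s0"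
          "L 0 = Ad k (L (c1 *\<^sub>R u1)) + T" "L b1 = Ad k (L (c2 *\<^sub>R u2)) + T"
          "L (2 *\<^sub>R b1) = Ad k (L (c3 *\<^sub>R u3)) + T"
          using mem[OF inR[of 0 b1 "2 *\<^sub>R b1"]] by blast
        have f1: "L b1 = Ad k (L (c2 *\<^sub>R u2 - c1 *\<^sub>R u1))" using kc(3,4) unfolding L0 Ldiff Ad_diff
          by (simp add: algebra_simps)
        have f2: "Ad k (L (c3 *\<^sub>R u3 - c1 *\<^sub>R u1)) = Ad k (L (2 *\<^sub>R (c2 *\<^sub>R u2 - c1 *\<^sub>R u1)))"
        proof -
          have "Ad k (L (c3 *\<^sub>R u3 - c1 *\<^sub>R u1)) = L (2 *\<^sub>R b1)" using kc(3,5) unfolding L0 Ldiff Ad_diff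
            by (simp add: algebra_simps)
          also have "\<dots> = 2 *\<^sub>R L b1" by (simp add: Lsc)
          also have "\<dots> = Ad k (L (2 *\<^sub>R (c2 *\<^sub>R u2 - c1 *\<^sub>R u1)))" using f1 by (simp add: Lsc Ad_scaleR)
          finally show ?thesis .
        qed
        have "L (c3 *\<^sub>R u3 - c1 *\<^sub>R u1) = L (2 *\<^sub>R (c2 *\<^sub>R u2 - c1 *\<^sub>R u1))"
          by (rule Ad_inj[OF Kinv[OF kc(1)] f2])
        then have g: "c3 *\<^sub>R u3 - c1 *\<^sub>R u1 = 2 *\<^sub>R (c2 *\<^sub>R u2 - c1 *\<^sub>R u1)" using Linj by (simp add: inj_eq)
        have c2z: "c2 = 0"
        proof (rule ccontr)
          assume c2: "c2 \<noteq> 0"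
          have "(c3 *\<^sub>R u3 + c1 *\<^sub>R u1) - (2*c2) *\<^sub>R u2 = (c3 *\<^sub>R u3 - c1 *\<^sub>R u1) - 2 *\<^sub>R (c2 *\<^sub>R u2 - c1 *\<^sub>R u1)"
            by (rule vec_id1)
          also have "\<dots> = 0" by (simp only: g diff_self)
          finally have h0: "(c3 *\<^sub>R u3 + c1 *\<^sub>R u1) - (2*c2) *\<^sub>R u2 = 0" .
          have h: "(2*c2) *\<^sub>R u2 = c3 *\<^sub>R u3 + c1 *\<^sub>R u1" using h0 right_minus_eq by metis
          have "u2 = (1 / (2 * c2)) *\<^sub>R ((2*c2) *\<^sub>R u2)" using c2 by simp
          also have "\<dots> = (1 / (2 * c2)) *\<^sub>R (c3 *\<^sub>R u3 + c1 *\<^sub>R u1)" by (simp only: h)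
          finally have "u2 = (1 / (2 * c2)) *\<^sub>R (c3 *\<^sub>R u3 + c1 *\<^sub>R u1)" .
          then have "u2 \<in> span {u1,u3}" by (auto intro!: span_add span_scale intro: span_base)
          then have "dim (insert u2 {u1,u3}) = dim {u1,u3}" by (rule dim_red)
          moreover have "dim {u1,u3} \<le> 2"
          proof -
            have "card {u1,u3} \<le> 2" by (cases "u1 = u3") auto
            moreover have "dim {u1,u3} \<le> card {u1,u3}" by (rule dim_le_card') simp
            ultimately show ?thesis by linarith
          qed
          moreover have "insert u2 {u1,u3} = {u1,u2,u3}" by auto
          ultimately show False using 2 by simp
        qed
        have c1z: "c1 = 0"
        proof (rule ccontr)
          assume c1: "c1 \<noteq> 0"
          have "(c3 *\<^sub>R u3 + c1 *\<^sub>R u1) - (2*c2) *\<^sub>R u2 = (c3 *\<^sub>R u3 - c1 *\<^sub>R u1) - 2 *\<^sub>R (c2 *\<^sub>R u2 - c1 *\<^sub>R u1)"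
            by (rule vec_id1)
          also have "\<dots> = 0" by (simp only: g diff_self)
          finally have "c3 *\<^sub>R u3 + c1 *\<^sub>R u1 = 0" using c2z by simp
          then have h: "c1 *\<^sub>R u1 = (- c3) *\<^sub>R u3" by (simp add: eq_neg_iff_add_eq_0 add.commute)
          have "u1 = (1 / c1) *\<^sub>R (c1 *\<^sub>R u1)" using c1 by simp
          also have "\<dots> = (1 / c1) *\<^sub>R ((- c3) *\<^sub>R u3)" by (simp only: h)
          finally have "u1 = (- c3 / c1) *\<^sub>R u3" by simp
          moreover have "(- c3 / c1) *\<^sub>R u3 \<in> span {u2,u3}" by (rule span_scale) (simp add: span_base)
          ultimately have "u1 \<in> span {u2,u3}" by simp
          then have "dim (insert u1 {u2,u3}) = dim {u2,u3}" by (rule dim_red)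
          moreover have "dim {u2,u3} \<le> 2"
          proof -
            have "card {u2,u3} \<le> 2" by (cases "u2 = u3") auto
            moreover have "dim {u2,u3} \<le> card {u2,u3}" by (rule dim_le_card') simp
            ultimately show ?thesis by linarith
          qed
          ultimately show False using 2 by simp
        qed
        have "L b1 = 0" using f1 c1z c2z L0 by simp
        then show False using Lz bnz by simp
      qed
    qed
  next
    assume d2: "dim {u1,u2,u3} = 2"
    show "s0 \<times> s0 \<times> s0 = RHS"
    proof
      show "RHS \<subseteq> s0 \<times> s0 \<times> s0" by (rule RHSsub)
      show "s0 \<times> s0 \<times> s0 \<subseteq> RHS"
      proof (clarify)
        fix Y1 Y2 Y3 assume Y: "Y1 \<in> s0" "Y2 \<in> s0" "Y3 \<in> s0"
        obtain y1 y2 y3 where y: "Y1 = L y1" "Y2 = L y2" "Y3 = L y3" using Y Lran by blast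
        obtain l c1 c2 c3 where l: "okl l" "rcomp l (c2 *\<^sub>R u2 - c1 *\<^sub>R u1) = y2 - y1"
            "rcomp l (c3 *\<^sub>R u3 - c1 *\<^sub>R u1) = y3 - y1"
          using core_geom[OF u1(1) u2(1) u3(1) d2, of "y2 - y1" "y3 - y1"] by blast
        obtain k where k: "k \<in> K0" "\<And>x. Ad k (L x) = L (rcomp l x)"
          using realize[of K0 L, OF Kid Krot Kcomp l(1)] by blast
        have rl: "rcomp l (x - y) = rcomp l x - rcomp l y" for x y using linear_diff[OF rcomp_linear] by blast
        define T where "T = L (y1 - rcomp l (c1 *\<^sub>R u1))"
        have T: "T \<in> s0" using Lran T_def by blast
        have X1: "L (c1 *\<^sub>R u1) \<in> a1" "L (c2 *\<^sub>R u2) \<in> a2" "L (c3 *\<^sub>R u3) \<in> a3" using u1 u2 u3 by auto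
        have q1: "Y1 = Ad k (L (c1 *\<^sub>R u1)) + T" unfolding T_def k(2) y Ldiff by simp
        have q2: "Y2 = Ad k (L (c2 *\<^sub>R u2)) + T"
        proof -
          have "Ad k (L (c2 *\<^sub>R u2)) + T = L (rcomp l (c2 *\<^sub>R u2 - c1 *\<^sub>R u1) + y1)"
            unfolding T_def k(2) rl Ladd Ldiff by simp
          then show ?thesis using l(2) y by simp
        qed
        have q3: "Y3 = Ad k (L (c3 *\<^sub>R u3)) + T"
        proof -
          have "Ad k (L (c3 *\<^sub>R u3)) + T = L (rcomp l (c3 *\<^sub>R u3 - c1 *\<^sub>R u1) + y1)"
            unfolding T_def k(2) rl Ladd Ldiff by simp
          then show ?thesis using l(3) y by simp
        qed
        show "(Y1, Y2, Y3) \<in> RHS" unfolding RHS_def using k(1) X1 T q1 q2 q3 by blast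
      qed
    qed
  qed
qed

lemma opt_all: "(\<forall>a. P a) \<longleftrightarrow> P None \<and> (\<forall>i. P (Some i))"
  by (metis option.exhaust)

lemma sum_option: "(\<Sum>c\<in>(UNIV::'n::finite option set). g c) = g None + (\<Sum>j\<in>UNIV. g (Some j))"
proof -
  have "(UNIV::'n option set) = insert None (Some ` UNIV)" by (rule UNIV_option_conv)
  then have "(\<Sum>c\<in>(UNIV::'n option set). g c) = (\<Sum>c\<in>insert None (Some ` UNIV). g c)" by simp
  also have "\<dots> = g None + (\<Sum>c\<in>Some ` UNIV. g c)" by (subst sum.insert) auto
  also have "(\<Sum>c\<in>Some ` UNIV. g c) = (\<Sum>j\<in>UNIV. g (Some j))" by (subst sum.reindex) (auto simp: inj_on_def)
  finally show ?thesis .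
qed

lemma mult_opt: "((A::'a::comm_semiring_1^('n::finite option)^'m) ** B) $ a $ b = A$a$None * B$None$b + (\<Sum>j\<in>UNIV. A$a$Some j * B$Some j$b)"
  unfolding matrix_matrix_mult_def by (simp add: sum_option)

definition Jd :: "'n option \<Rightarrow> real" where "Jd a = (if a = None then -1 else 1)"

lemma J_entry: "(Jform :: real^('n::finite option)^('n option)) $ i $ j = (if i = j then Jd i else 0)"
  by (simp add: Jform_def Jd_def)

lemma J_left: "(Jform ** X) $ a $ b = Jd a * X $ a $ (b::'n::finite option)"
  unfolding matrix_matrix_mult_def J_entry by (simp add: if_distrib if_distribR sum.delta cong: if_cong)

lemma J_right: "(X ** Jform) $ a $ b = X $ a $ b * Jd (b::'n::finite option)"
  unfolding matrix_matrix_mult_def J_entry by (simp add: if_distrib if_distribR sum.delta' cong: if_cong)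

definition LS :: "real^'n::finite \<Rightarrow> real^('n option)^('n option)" where
  "LS u = (\<chi> a b. case a of None \<Rightarrow> (case b of None \<Rightarrow> 0 | Some j \<Rightarrow> u$j)
                         | Some i \<Rightarrow> (case b of None \<Rightarrow> u$i | Some j \<Rightarrow> 0))"

lemma LS_simps[simp]: "LS u $ None $ None = 0" "LS u $ None $ Some j = u $ j"
   "LS u $ Some i $ None = u $ i" "LS u $ Some i $ Some j = 0"
  by (simp_all add: LS_def)

definition blk :: "real^'n::finite^'n \<Rightarrow> real^('n option)^('n option)" where
  "blk Q = (\<chi> a b. case a of None \<Rightarrow> (case b of None \<Rightarrow> 1 | Some j \<Rightarrow> 0)
                         | Some i \<Rightarrow> (case b of None \<Rightarrow> 0 | Some j \<Rightarrow> Q$i$j))"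

lemma blk_simps[simp]: "blk Q $ None $ None = 1" "blk Q $ None $ Some j = 0"
   "blk Q $ Some i $ None = 0" "blk Q $ Some i $ Some j = Q $ i $ j"
  by (simp_all add: blk_def)

lemma opt_mat_eq: "(X::'a^('n::finite option)^('n option)) = Y \<longleftrightarrow> X$None$None = Y$None$None \<and> (\<forall>j. X$None$Some j = Y$None$Some j)
   \<and> (\<forall>i. X$Some i$None = Y$Some i$None) \<and> (\<forall>i j. X$Some i$Some j = Y$Some i$Some j)"
  by (auto simp: vec_eq_iff opt_all)

lemma blk_mult: "blk A ** blk B = blk (A ** B)"
  by (simp add: opt_mat_eq mult_opt, simp add: matrix_matrix_mult_def)

lemma blk_transpose: "transpose (blk Q) = blk (transpose Q)"
  by (simp add: opt_mat_eq transpose_def)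

lemma blk_one: "blk (mat 1) = mat 1"
  by (simp add: opt_mat_eq mat_def)

lemma blk_J: "Jform ** blk Q = blk Q ** Jform"
  by (simp add: opt_mat_eq J_left J_right Jd_def)

lemma LS_linear: "linear LS"
  by (rule linearI) (simp_all add: opt_mat_eq)

lemma LS_inj: "inj LS"
proof
  fix u v assume "LS u = LS v"
  then have "\<forall>j. LS u $ None $ Some j = LS v $ None $ Some j" by simp
  then show "u = v" by (simp add: vec_eq_iff)
qed

lemma blk_conj: "blk Q ** LS x ** transpose (blk Q) = LS (Q *v x)"
  by (simp add: blk_transpose opt_mat_eq mult_opt matrix_vector_mult_def transpose_def mult.commute)

lemma LS_in: "LS u \<in> s_SOe"
  by (simp add: s_SOe_def so_n1_def opt_mat_eq J_left J_right Jd_def transpose_def)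

lemma sSO_range: "range LS = s_SOe"
proof
  show "range LS \<subseteq> s_SOe" using LS_in by auto
  show "s_SOe \<subseteq> range LS"
  proof
    fix X :: "real^('n::finite option)^('n option)" assume X: "X \<in> s_SOe"
    have sym: "transpose X = X" and so: "transpose X ** Jform + Jform ** X = 0"
      using X by (auto simp: s_SOe_def so_n1_def)
    have symE: "X $ b $ a = X $ a $ b" for a b
    proof -
      have "transpose X $ a $ b = X $ a $ b" using sym by simp
      then show ?thesis by (simp add: transpose_def)
    qed
    have e: "X $ b $ a * Jd b + Jd a * X $ a $ b = 0" for a b
    proof -
      have "(transpose X ** Jform + Jform ** X) $ a $ b = 0" using so by simp
      then show ?thesis by (simp add: J_left J_right transpose_def)
    qed
    have nn: "X $ None $ None = 0" using e[of None None] by (simp add: Jd_def)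
    have ss: "X $ Some i $ Some j = 0" for i j using e[of "Some i" "Some j"] symE[of "Some i" "Some j"] by (simp add: Jd_def)
    have c3: "\<forall>i. X $ Some i $ None = X $ None $ Some i" using symE by blast
    have "X = LS (\<chi> j. X $ None $ Some j)"
      unfolding opt_mat_eq using nn ss c3 by simp
    then show "X \<in> range LS" by blast
  qed
qed

lemma par_vec:
  fixes u w :: "real^'n::finite"
  shows "(\<forall>i j. u$i * w$j = w$i * u$j) \<longleftrightarrow> (u = 0 \<or> (\<exists>c. w = c *\<^sub>R u))"
proof
  assume h: "\<forall>i j. u$i * w$j = w$i * u$j"
  show "u = 0 \<or> (\<exists>c. w = c *\<^sub>R u)"
  proof (cases "u = 0")
    case False
    then obtain i where ui: "u$i \<noteq> 0" by (auto simp: vec_eq_iff)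
    have "w = (w$i / u$i) *\<^sub>R u"
      unfolding vec_eq_iff
    proof
      fix j
      have "u$i * w$j = w$i * u$j" using h by blast
      then show "w$j = ((w$i / u$i) *\<^sub>R u)$j" using ui by (simp add: field_simps)
    qed
    then show ?thesis by blast
  qed simp
next
  assume "u = 0 \<or> (\<exists>c. w = c *\<^sub>R u)"
  then show "\<forall>i j. u$i * w$j = w$i * u$j" by auto
qed

lemma LS_comm: "LS u ** LS w - LS w ** LS u = 0 \<longleftrightarrow> (u = 0 \<or> (\<exists>c. w = c *\<^sub>R u))"
proof -
  have "LS u ** LS w - LS w ** LS u = 0 \<longleftrightarrow> (\<forall>i j. u$i * w$j = w$i * u$j)"
    by (simp add: opt_mat_eq mult_opt mult.commute right_minus_eq)
  then show ?thesis using par_vec by simp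
qed

lemma J_sym: "transpose (Jform :: real^('n::finite option)^('n option)) = Jform"
  by (simp add: vec_eq_iff transpose_def J_entry)

lemma KSO_basic:
  assumes "k \<in> (K_SOe :: (real^('n::finite option)^('n option)) set)"
  shows "transpose k ** k = mat 1" "k ** transpose k = mat 1" "transpose k ** Jform ** k = Jform"
    "det k = 1" "k $ None $ None > 0"
  using assms by (auto simp: K_SOe_def SOe_def matrix_left_right_inverse)

lemma KSO_Ad: "k \<in> K_SOe \<Longrightarrow> Ad k X = k ** X ** transpose k"
  using KSO_basic[of k] matrix_inv_eq[of k "transpose k"] by (simp add: Ad_def)

lemma KSO_inv: "k \<in> K_SOe \<Longrightarrow> invertible k"
  using KSO_basic[of k] by (auto simp: invertible_def)

lemma KSO_J:
  assumes k: "k \<in> K_SOe"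
  shows "Jform ** k = k ** Jform"
proof -
  have "Jform ** k = (k ** transpose k) ** Jform ** k" using KSO_basic[OF k] by simp
  also have "\<dots> = k ** (transpose k ** Jform ** k)" by (simp add: matrix_mul_assoc)
  also have "\<dots> = k ** Jform" using KSO_basic[OF k] by simp
  finally show ?thesis .
qed

lemma KSO_block: assumes k: "k \<in> K_SOe" shows "k $ None $ Some j = 0"
proof -
  have "(Jform ** k) $ None $ Some j = (k ** Jform) $ None $ Some j" using KSO_J[OF k] by simp
  then show ?thesis by (simp add: J_left J_right Jd_def)
qed

lemma conj_J:
  fixes k X J :: "real^'m::finite^'m"
  assumes Jk: "J ** k = k ** J" and JT: "transpose J = J" and XT: "transpose X = X" and XJ: "X ** J + J ** X = 0"
  shows "transpose (k ** X ** transpose k) = k ** X ** transpose k"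
    "(k ** X ** transpose k) ** J + J ** (k ** X ** transpose k) = 0"
proof -
  show "transpose (k ** X ** transpose k) = k ** X ** transpose k"
    by (simp add: matrix_transpose_mul XT matrix_mul_assoc)
  have kTJ: "transpose k ** J = J ** transpose k"
  proof -
    have "transpose (J ** k) = transpose (k ** J)" using Jk by simp
    then show ?thesis by (simp add: matrix_transpose_mul JT)
  qed
  have r1: "A ** transpose k ** J = A ** J ** transpose k" for A :: "real^'m^'m"
    by (metis kTJ matrix_mul_assoc)
  have "(k ** X ** transpose k) ** J + J ** (k ** X ** transpose k) = k ** (X ** J + J ** X) ** transpose k"
    by (simp add: matrix_add_ldistrib matrix_add_rdistrib' matrix_mul_assoc r1 Jk)
  then show "(k ** X ** transpose k) ** J + J ** (k ** X ** transpose k) = 0" using XJ by simp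
qed

lemma KSO_pres: assumes k: "k \<in> K_SOe" shows "Ad k (LS x) \<in> s_SOe"
proof -
  have X: "transpose (LS x) = LS x" "LS x ** Jform + Jform ** LS x = 0"
    using LS_in[of x] by (auto simp: s_SOe_def so_n1_def)
  show ?thesis using conj_J[OF KSO_J[OF k] J_sym X] unfolding KSO_Ad[OF k]
    by (simp add: s_SOe_def so_n1_def)
qed

lemma Ad_one: "Ad (mat 1) (X::'a::real_normed_field^'n^'n) = X"
  using matrix_inv_eq[of "mat 1 :: 'a^'n^'n" "mat 1"] by (simp add: Ad_def)

lemma KSO_id: "(mat 1 :: real^('n::finite option)^('n option)) \<in> K_SOe"
proof -
  have "(mat 1 :: real^('n::finite option)^('n option)) $ None $ None = 1" by (simp add: mat_def)
  then show "(mat 1 :: real^('n::finite option)^('n option)) \<in> K_SOe" by (simp add: K_SOe_def SOe_def)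
qed

lemma KSO_comp:
  assumes k1: "k1 \<in> K_SOe" and k2: "k2 \<in> K_SOe"
  shows "k1 ** k2 \<in> K_SOe" "Ad (k1 ** k2) X = Ad k1 (Ad k2 X)"
proof -
  note b1 = KSO_basic[OF k1] and b2 = KSO_basic[OF k2]
  have t1: "transpose (k1 ** k2) ** (k1 ** k2) = mat 1"
  proof -
    have "transpose (k1 ** k2) ** (k1 ** k2) = transpose k2 ** (transpose k1 ** k1) ** k2"
      by (simp add: matrix_transpose_mul matrix_mul_assoc)
    then show ?thesis using b1 b2 by simp
  qed
  have t2: "transpose (k1 ** k2) ** Jform ** (k1 ** k2) = Jform"
  proof -
    have "transpose (k1 ** k2) ** Jform ** (k1 ** k2) = transpose k2 ** (transpose k1 ** Jform ** k1) ** k2"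
      by (simp add: matrix_transpose_mul matrix_mul_assoc)
    then show ?thesis using b1 b2 by simp
  qed
  have t3: "det (k1 ** k2) = 1" using b1 b2 by (simp add: det_mul)
  have t4: "(k1 ** k2) $ None $ None > 0"
    using b1 b2 KSO_block[OF k1] by (simp add: mult_opt)
  show "k1 ** k2 \<in> K_SOe" using t1 t2 t3 t4 by (simp add: K_SOe_def SOe_def)
  then show "Ad (k1 ** k2) X = Ad k1 (Ad k2 X)"
    using k1 k2 by (simp add: KSO_Ad matrix_transpose_mul matrix_mul_assoc)
qed

lemma Rot_orth: "orthon e f \<Longrightarrow> orthogonal_transformation (Rot e f t)"
  unfolding orthogonal_transformation using Rot_linear Rot_norm by blast

lemma Rot_matrix: "matrix (Rot e f t) *v x = Rot e f t (x::real^'n::finite)"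
  by (rule matrix_works) (simp add: linear_matrix_vector_mul_eq Rot_linear)

lemma Rot_half: "orthon e f \<Longrightarrow> matrix (Rot e f t) = matrix (Rot e f (t/2)) ** matrix (Rot e f (t/2 :: real) :: real^'n::finite \<Rightarrow> real^'n)"
proof -
  assume o: "orthon e f"
  have "Rot e f (t/2) \<circ> Rot e f (t/2) = Rot e f t" using Rot_comp[OF o, of "t/2" "t/2"] by (auto simp: fun_eq_iff)
  then show ?thesis using matrix_compose[OF Rot_linear Rot_linear, of e f "t/2" e f "t/2"] by simp
qed

lemma blk_orth: "orthogonal_matrix Q \<Longrightarrow> transpose (blk Q) ** blk Q = mat 1 \<and> blk Q ** transpose (blk Q) = mat 1"
  by (simp add: blk_transpose blk_mult orthogonal_matrix_def blk_one)

lemma KSO_rot: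
  assumes o: "orthon e f"
  shows "\<exists>k\<in>K_SOe. \<forall>x. Ad k (LS x) = LS (Rot e f t (x::real^'n::finite))"
proof -
  define Q :: "real^'n^'n" where "Q = matrix (Rot e f t)"
  define Q' :: "real^'n^'n" where "Q' = matrix (Rot e f (t/2))"
  have oQ: "orthogonal_matrix Q" unfolding Q_def using Rot_orth[OF o] orthogonal_transformation_matrix by blast
  have oQ': "orthogonal_matrix Q'" unfolding Q'_def using Rot_orth[OF o] orthogonal_transformation_matrix by blast
  have QQ: "Q = Q' ** Q'" unfolding Q_def Q'_def by (rule Rot_half[OF o])
  define k where "k = blk Q"
  have kT: "transpose k ** k = mat 1" "k ** transpose k = mat 1" using blk_orth[OF oQ] k_def by auto
  have kJ: "transpose k ** Jform ** k = Jform"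
  proof -
    have "transpose k ** Jform ** k = transpose k ** (Jform ** k)" by (simp add: matrix_mul_assoc)
    also have "\<dots> = (transpose k ** k) ** Jform" unfolding k_def blk_J by (simp add: matrix_mul_assoc)
    finally show ?thesis using kT by simp
  qed
  have dk: "det k = 1"
  proof -
    have "k = blk Q' ** blk Q'" unfolding k_def QQ blk_mult ..
    then have "det k = det (blk Q') * det (blk Q')" by (simp add: det_mul)
    moreover have "orthogonal_matrix (blk Q')" using blk_orth[OF oQ'] by (simp add: orthogonal_matrix_def)
    then have "det (blk Q') = 1 \<or> det (blk Q') = -1" by (rule det_orthogonal_matrix)
    ultimately show ?thesis by auto
  qed
  have kK: "k \<in> K_SOe" using kT kJ dk by (simp add: K_SOe_def SOe_def k_def)
  have "Ad k (LS x) = LS (Rot e f t x)" for x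
  proof -
    have "Ad k (LS x) = k ** LS x ** transpose k" by (rule KSO_Ad[OF kK])
    also have "\<dots> = LS (Q *v x)" unfolding k_def by (rule blk_conj)
    finally show ?thesis unfolding Q_def Rot_matrix .
  qed
  then show ?thesis using kK by blast
qed

lemma SO_lemma:
  assumes "CARD('n::finite) \<ge> 2"
  shows "lemma_for (s_SOe :: (real^('n option)^('n option)) set) K_SOe"
proof (rule generic[where L = LS])
  show "DIM(real^'n) \<ge> 2" using assms by simp
  show "linear LS" by (rule LS_linear)
  show "inj LS" by (rule LS_inj)
  show "range LS = s_SOe" by (rule sSO_range)
  show "LS x ** LS y - LS y ** LS x = 0 \<longleftrightarrow> (x = 0 \<or> (\<exists>c. y = c *\<^sub>R x))" for x y by (rule LS_comm)
  show "invertible k" if "k \<in> K_SOe" for k using KSO_inv that by blast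
  show "Ad k (LS x) \<in> s_SOe" if "k \<in> K_SOe" for k x using KSO_pres that by blast
  show "\<exists>k\<in>K_SOe. \<forall>X. Ad k X = X" using KSO_id Ad_one by blast
  show "\<exists>k\<in>K_SOe. \<forall>x. Ad k (LS x) = LS (Rot e f t x)" if "orthon e f" for e f t using KSO_rot that by blast
  show "\<exists>k\<in>K_SOe. \<forall>X. Ad k X = Ad k1 (Ad k2 X)" if "k1 \<in> K_SOe" "k2 \<in> K_SOe" for k1 k2
    using KSO_comp[OF that] by blast
qed

lemma orth_Ad: "transpose k ** k = mat 1 \<Longrightarrow> Ad (k::real^'n::finite^'n) X = k ** X ** transpose k"
  using matrix_inv_eq[of k "transpose k"] by (simp add: Ad_def matrix_left_right_inverse)

lemma orth_inv: "transpose k ** k = mat 1 \<Longrightarrow> invertible (k::real^'n::finite^'n)"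
  unfolding invertible_def by (metis matrix_left_right_inverse)

lemma trace_conj: "transpose k ** k = mat 1 \<Longrightarrow> trace (k ** X ** transpose (k::real^'n::finite^'n)) = trace X"
  by (metis matrix_mul_assoc matrix_mul_lid trace_mul_sym)

definition L2 :: "real^2 \<Rightarrow> real^2^2" where
  "L2 x = (\<chi> i j. if i = 1 \<and> j = 1 then x$1 else if i = 2 \<and> j = 2 then - (x$1) else x$2)"

lemma L2_simps[simp]: "L2 x $ 1 $ 1 = x$1" "L2 x $ 1 $ 2 = x$2" "L2 x $ 2 $ 1 = x$2" "L2 x $ 2 $ 2 = - x$1"
  by (simp_all add: L2_def)

lemma mat2_eq: "(X::'a^2^2) = Y \<longleftrightarrow> X$1$1 = Y$1$1 \<and> X$1$2 = Y$1$2 \<and> X$2$1 = Y$2$1 \<and> X$2$2 = Y$2$2"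
  by (auto simp: vec_eq_iff forall_2)

lemma vec2_eq: "(x::'a^2) = y \<longleftrightarrow> x$1 = y$1 \<and> x$2 = y$2"
  by (auto simp: vec_eq_iff forall_2)

lemma L2_linear: "linear L2"
  by (rule linearI) (simp_all add: mat2_eq)

lemma L2_inj: "inj L2"
proof
  fix u v assume "L2 u = L2 v"
  then have "L2 u $ 1 $ 1 = L2 v $ 1 $ 1" "L2 u $ 1 $ 2 = L2 v $ 1 $ 2" by simp_all
  then show "u = v" by (simp add: vec2_eq)
qed

lemma L2_range: "range L2 = s_SL2R"
proof
  show "range L2 \<subseteq> s_SL2R"
    by (auto simp: s_SL2R_def sl2R_def trace_def sum_2 mat2_eq transpose_def)
  show "s_SL2R \<subseteq> range L2"
  proof
    fix X assume "X \<in> s_SL2R"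
    then have t: "X$1$1 + X$2$2 = 0" and s: "transpose X = X" by (auto simp: s_SL2R_def sl2R_def trace_def sum_2)
    have "transpose X $ 2 $ 1 = X $ 2 $ 1" using s by simp
    then have s21: "X$1$2 = X$2$1" by (simp add: transpose_def)
    have "X = L2 (vector [X$1$1, X$1$2])" using t s21 by (simp add: mat2_eq)
    then show "X \<in> range L2" by blast
  qed
qed

lemma L2_comm: "L2 u ** L2 w - L2 w ** L2 u = 0 \<longleftrightarrow> (u = 0 \<or> (\<exists>c. w = c *\<^sub>R u))"
proof -
  have "L2 u ** L2 w - L2 w ** L2 u = 0 \<longleftrightarrow> (\<forall>i j. u$i * w$j = w$i * u$j)"
    by (simp add: mat2_eq matrix_matrix_mult_def sum_2 forall_2 algebra_simps)
  then show ?thesis using par_vec by simp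
qed

lemma KR_basic: "k \<in> K_SL2R \<Longrightarrow> transpose k ** k = mat 1 \<and> det k = 1"
  by (simp add: K_SL2R_def SL2R_def)

lemma KR_pres: assumes "k \<in> K_SL2R" shows "Ad k (L2 x) \<in> s_SL2R"
proof -
  have o: "transpose k ** k = mat 1" using KR_basic[OF assms] by simp
  have "L2 x \<in> s_SL2R" using L2_range by blast
  then have X: "trace (L2 x) = 0" "transpose (L2 x) = L2 x" by (auto simp: s_SL2R_def sl2R_def)
  have "transpose (k ** L2 x ** transpose k) = k ** L2 x ** transpose k"
    using X by (simp add: matrix_transpose_mul matrix_mul_assoc)
  moreover have "trace (k ** L2 x ** transpose k) = 0" using trace_conj[OF o] X by simp
  ultimately show ?thesis unfolding orth_Ad[OF o] by (simp add: s_SL2R_def sl2R_def)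
qed

lemma KR_id: "(mat 1 :: real^2^2) \<in> K_SL2R"
  by (simp add: K_SL2R_def SL2R_def)

lemma KR_comp:
  assumes k1: "k1 \<in> K_SL2R" and k2: "k2 \<in> K_SL2R"
  shows "k1 ** k2 \<in> K_SL2R" "Ad (k1 ** k2) X = Ad k1 (Ad k2 X)"
proof -
  have b1: "transpose k1 ** k1 = mat 1" "det k1 = 1" and b2: "transpose k2 ** k2 = mat 1" "det k2 = 1"
    using KR_basic[OF k1] KR_basic[OF k2] by auto
  have t1: "transpose (k1 ** k2) ** (k1 ** k2) = mat 1"
  proof -
    have "transpose (k1 ** k2) ** (k1 ** k2) = transpose k2 ** (transpose k1 ** k1) ** k2"
      by (simp add: matrix_transpose_mul matrix_mul_assoc)
    then show ?thesis using b1 b2 by simp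
  qed
  show "k1 ** k2 \<in> K_SL2R" using t1 b1 b2 by (simp add: K_SL2R_def SL2R_def det_mul)
  show "Ad (k1 ** k2) X = Ad k1 (Ad k2 X)"
    using t1 b1 b2 by (simp add: orth_Ad matrix_transpose_mul matrix_mul_assoc)
qed

lemma inner2: "(x::real^2) \<bullet> y = x$1 * y$1 + x$2 * y$2"
  by (simp add: inner_vec_def sum_2)

lemma rot2_coords:
  fixes e f x :: "real^2"
  assumes o: "orthon e f"
  shows "(e$1*f$2 - e$2*f$1)^2 = 1"
    "Rot e f t x = vector [cos t * x$1 - (e$1*f$2 - e$2*f$1) * sin t * x$2, (e$1*f$2 - e$2*f$1) * sin t * x$1 + cos t * x$2]"
proof -
  define sg where "sg = e$1*f$2 - e$2*f$1"
  have h: "e$1*e$1 + e$2*e$2 = 1" "f$1*f$1 + f$2*f$2 = 1" "e$1*f$1 + e$2*f$2 = 0"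
    using o by (auto simp: orthon_def inner2)
  have s2: "sg * sg = 1" using h unfolding sg_def by algebra
  then show "(e$1*f$2 - e$2*f$1)^2 = 1" unfolding sg_def by (simp add: power2_eq_square)
  have f1: "f$1 = - sg * e$2" using h unfolding sg_def by algebra
  have f2: "f$2 = sg * e$1" using h unfolding sg_def by algebra
  have c1: "(Rot e f t x)$1 = cos t * x$1 - sg * sin t * x$2"
    unfolding Rot_def inner2 using h(1) s2 f1 f2 by simp algebra
  have c2: "(Rot e f t x)$2 = sg * sin t * x$1 + cos t * x$2"
    unfolding Rot_def inner2 using h(1) s2 f1 f2 by simp algebra
  show "Rot e f t x = vector [cos t * x$1 - (e$1*f$2 - e$2*f$1) * sin t * x$2, (e$1*f$2 - e$2*f$1) * sin t * x$1 + cos t * x$2]"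
    using c1 c2 unfolding sg_def by (simp add: vec2_eq)
qed

lemma KR_rot:
  assumes o: "orthon e f"
  shows "\<exists>k\<in>K_SL2R. \<forall>x. Ad k (L2 x) = L2 (Rot e f t x)"
proof -
  define sg where "sg = e$1*f$2 - e$2*f$1"
  have s2: "sg^2 = 1" using rot2_coords(1)[OF o] unfolding sg_def .
  then have "sg = 1 \<or> sg = -1" by (simp add: power2_eq_1_iff)
  then have tr: "cos (sg * t) = cos t" "sin (sg * t) = sg * sin t" by auto
  define C where "C = cos (sg * t / 2)"
  define S where "S = sin (sg * t / 2)"
  have CS: "C*C - S*S = cos t" "2*S*C = sg * sin t" "C*C + S*S = 1"
  proof -
    have "cos (2 * (sg * t / 2)) = C*C - S*S" unfolding C_def S_def cos_double by (simp add: power2_eq_square)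
    then show "C*C - S*S = cos t" using tr by simp
    have "sin (2 * (sg * t / 2)) = 2*S*C" unfolding C_def S_def sin_double by simp
    then show "2*S*C = sg * sin t" using tr by simp
    show "C*C + S*S = 1" unfolding C_def S_def using sin_cos_squared_add3[of "sg*t/2"] by (simp add: algebra_simps)
  qed
  define k :: "real^2^2" where "k = vector [vector [C, -S], vector [S, C]]"
  have ke: "k$1$1 = C" "k$1$2 = -S" "k$2$1 = S" "k$2$2 = C" by (simp_all add: k_def)
  have kT: "transpose k ** k = mat 1"
    using CS(3) by (simp add: mat2_eq matrix_matrix_mult_def sum_2 transpose_def ke mat_def algebra_simps)
  have kd: "det k = 1" using CS(3) by (simp add: det_2 ke)
  have kK: "k \<in> K_SL2R" using kT kd by (simp add: K_SL2R_def SL2R_def)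
  have "Ad k (L2 x) = L2 (Rot e f t x)" for x
  proof -
    have "k ** L2 x ** transpose k = L2 (vector [(C*C - S*S) * x$1 - (2*S*C) * x$2, (2*S*C) * x$1 + (C*C-S*S) * x$2])"
      by (simp add: mat2_eq matrix_matrix_mult_def sum_2 transpose_def ke algebra_simps)
    also have "\<dots> = L2 (Rot e f t x)"
      unfolding rot2_coords(2)[OF o] sg_def[symmetric] CS(1) CS(2) ..
    finally have "k ** L2 x ** transpose k = L2 (Rot e f t x)" .
    then show ?thesis using orth_Ad[OF kT] by simp
  qed
  then show ?thesis using kK by blast
qed

lemma SR_lemma: "lemma_for s_SL2R K_SL2R"
proof (rule generic[where L = L2])
  show "DIM(real^2) \<ge> 2" by simp
  show "linear L2" by (rule L2_linear)
  show "inj L2" by (rule L2_inj)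
  show "range L2 = s_SL2R" by (rule L2_range)
  show "L2 x ** L2 y - L2 y ** L2 x = 0 \<longleftrightarrow> (x = 0 \<or> (\<exists>c. y = c *\<^sub>R x))" for x y by (rule L2_comm)
  show "invertible k" if "k \<in> K_SL2R" for k using KR_basic[OF that] orth_inv by blast
  show "Ad k (L2 x) \<in> s_SL2R" if "k \<in> K_SL2R" for k x using KR_pres that by blast
  show "\<exists>k\<in>K_SL2R. \<forall>X. Ad k X = X" using KR_id Ad_one by blast
  show "\<exists>k\<in>K_SL2R. \<forall>x. Ad k (L2 x) = L2 (Rot e f t x)" if "orthon e f" for e f t using KR_rot that by blast
  show "\<exists>k\<in>K_SL2R. \<forall>X. Ad k X = Ad k1 (Ad k2 X)" if "k1 \<in> K_SL2R" "k2 \<in> K_SL2R" for k1 k2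
    using KR_comp[OF that] by blast
qed

definition L3 :: "real^3 \<Rightarrow> complex^2^2" where
  "L3 x = (\<chi> i j. if i = 1 \<and> j = 1 then complex_of_real (x$3) else if i = 2 \<and> j = 2 then - complex_of_real (x$3)
                   else if i = 1 then Complex (x$1) (- x$2) else Complex (x$1) (x$2))"

lemma L3_simps[simp]: "L3 x $ 1 $ 1 = complex_of_real (x$3)" "L3 x $ 1 $ 2 = Complex (x$1) (- x$2)"
  "L3 x $ 2 $ 1 = Complex (x$1) (x$2)" "L3 x $ 2 $ 2 = - complex_of_real (x$3)"
  by (simp_all add: L3_def)

lemma cmat2_eq: "(X::'a^2^2) = Y \<longleftrightarrow> X$1$1 = Y$1$1 \<and> X$1$2 = Y$1$2 \<and> X$2$1 = Y$2$1 \<and> X$2$2 = Y$2$2"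
  by (auto simp: vec_eq_iff forall_2)

lemma vec3_eq: "(x::'a^3) = y \<longleftrightarrow> x$1 = y$1 \<and> x$2 = y$2 \<and> x$3 = y$3"
  by (auto simp: vec_eq_iff forall_3)

lemma inner3: "(x::real^3) \<bullet> y = x$1 * y$1 + x$2 * y$2 + x$3 * y$3"
  by (simp add: inner_vec_def sum_3)

definition kC :: "real \<Rightarrow> real \<Rightarrow> real \<Rightarrow> real \<Rightarrow> real \<Rightarrow> complex^2^2" where
  "kC C S n1 n2 n3 = (\<chi> i j. if i = 1 \<and> j = 1 then Complex C (- S*n3) else if i = 2 \<and> j = 2 then Complex C (S*n3)
                   else if i = 1 then Complex (- S*n2) (- S*n1) else Complex (S*n2) (- S*n1))"

lemma kC_simps[simp]: "kC C S n1 n2 n3 $ 1 $ 1 = Complex C (- S*n3)" "kC C S n1 n2 n3 $ 1 $ 2 = Complex (- S*n2) (- S*n1)"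
  "kC C S n1 n2 n3 $ 2 $ 1 = Complex (S*n2) (- S*n1)" "kC C S n1 n2 n3 $ 2 $ 2 = Complex C (S*n3)"
  by (simp_all add: kC_def)

lemma rot_identity:
  fixes e f x :: "real^3"
  assumes o: "orthon e f"
  defines "n1 \<equiv> e$2*f$3 - e$3*f$2" and "n2 \<equiv> e$3*f$1 - e$1*f$3" and "n3 \<equiv> e$1*f$2 - e$2*f$1"
  assumes CS: "C*C + S*S = 1" and that: "cos (2*t) = C*C - S*S" "sin (2*t) = 2*S*C"
  shows "kC C S n1 n2 n3 ** L3 x ** ctrans (kC C S n1 n2 n3) = L3 (Rot e f (2 * t) x)"
proof -
  have h: "e$1*e$1 + e$2*e$2 + e$3*e$3 = 1" "f$1*f$1 + f$2*f$2 + f$3*f$3 = 1" "e$1*f$1 + e$2*f$2 + e$3*f$3 = 0"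
    using o by (auto simp: orthon_def inner3)
  show ?thesis
    unfolding Rot_def inner3 that
    apply (simp add: cmat2_eq matrix_matrix_mult_def sum_2 ctrans_def complex_eq_iff n1_def n2_def n3_def)
    using h CS
    apply (intro conjI)
    apply (simp add: algebra_simps | algebra)+
    done
qed

lemma ctrans_mult: "ctrans (A ** B) = ctrans B ** ctrans (A::complex^'n::finite^'n)"
  by (simp add: ctrans_def matrix_matrix_mult_def vec_eq_iff mult.commute)

lemma ctrans_ctrans[simp]: "ctrans (ctrans A) = (A::complex^'n::finite^'n)"
  by (simp add: ctrans_def vec_eq_iff)

lemma ctrans_one[simp]: "ctrans (mat 1 :: complex^'n::finite^'n) = mat 1"
  by (simp add: ctrans_def vec_eq_iff mat_def)

lemma KC_basic: "k \<in> K_SL2C \<Longrightarrow> ctrans k ** k = mat 1 \<and> k ** ctrans k = mat 1 \<and> det k = 1"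
  by (simp add: K_SL2C_def SL2C_def matrix_left_right_inverse)

lemma KC_Ad: "k \<in> K_SL2C \<Longrightarrow> Ad k X = k ** X ** ctrans k"
  using KC_basic[of k] matrix_inv_eq[of k "ctrans k"] by (simp add: Ad_def)

lemma KC_inv: "k \<in> K_SL2C \<Longrightarrow> invertible k"
  using KC_basic[of k] by (auto simp: invertible_def)

lemma L3_linear: "linear L3"
  by (rule linearI) (simp_all add: cmat2_eq complex_eq_iff)

lemma L3_inj: "inj L3"
proof
  fix u v assume "L3 u = L3 v"
  then have "L3 u $ 1 $ 1 = L3 v $ 1 $ 1" "L3 u $ 2 $ 1 = L3 v $ 2 $ 1" by simp_all
  then show "u = v" by (simp add: vec3_eq complex_eq_iff)
qed

lemma L3_in: "L3 x \<in> s_SL2C"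
  by (simp add: s_SL2C_def sl2C_def trace_def sum_2 cmat2_eq ctrans_def complex_eq_iff)

lemma L3_range: "range L3 = s_SL2C"
proof
  show "range L3 \<subseteq> s_SL2C" using L3_in by auto
  show "s_SL2C \<subseteq> range L3"
  proof
    fix X assume "X \<in> s_SL2C"
    then have t: "X$1$1 + X$2$2 = 0" and s: "ctrans X = X" by (auto simp: s_SL2C_def sl2C_def trace_def sum_2)
    have "ctrans X $ 1 $ 1 = X $ 1 $ 1" "ctrans X $ 1 $ 2 = X $ 1 $ 2" using s by simp_all
    then have h: "cnj (X$1$1) = X$1$1" "cnj (X$2$1) = X$1$2" by (simp_all add: ctrans_def)
    have "X = L3 (vector [Re (X$2$1), Im (X$2$1), Re (X$1$1)])"
      using t h by (simp add: cmat2_eq complex_eq_iff)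
    then show "X \<in> range L3" by blast
  qed
qed

lemma L3_comm: "L3 u ** L3 w - L3 w ** L3 u = 0 \<longleftrightarrow> (u = 0 \<or> (\<exists>c. w = c *\<^sub>R u))"
proof -
  have "L3 u ** L3 w - L3 w ** L3 u = 0 \<longleftrightarrow> (u$1*w$2 = w$1*u$2 \<and> u$3*w$1 = w$3*u$1 \<and> u$3*w$2 = w$3*u$2)"
    by (simp add: cmat2_eq matrix_matrix_mult_def sum_2 complex_eq_iff algebra_simps) (auto simp: algebra_simps)
  also have "\<dots> \<longleftrightarrow> (\<forall>i j. u$i * w$j = w$i * u$j)"
    by (auto simp: forall_3 algebra_simps)
  finally show ?thesis using par_vec by simp
qed

lemma KC_pres: assumes "k \<in> K_SL2C" shows "Ad k (L3 x) \<in> s_SL2C"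
proof -
  have o: "ctrans k ** k = mat 1" using KC_basic[OF assms] by simp
  have X: "trace (L3 x) = 0" "ctrans (L3 x) = L3 x" using L3_in[of x] by (auto simp: s_SL2C_def sl2C_def)
  have "ctrans (k ** L3 x ** ctrans k) = k ** L3 x ** ctrans k"
    using X by (simp add: ctrans_mult matrix_mul_assoc)
  moreover have "trace (k ** L3 x ** ctrans k) = 0"
    using X o by (metis matrix_mul_assoc matrix_mul_lid trace_mul_sym)
  ultimately show ?thesis unfolding KC_Ad[OF assms] by (simp add: s_SL2C_def sl2C_def)
qed

lemma KC_id: "(mat 1 :: complex^2^2) \<in> K_SL2C"
  by (simp add: K_SL2C_def SL2C_def)

lemma KC_comp:
  assumes k1: "k1 \<in> K_SL2C" and k2: "k2 \<in> K_SL2C"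
  shows "k1 ** k2 \<in> K_SL2C" "Ad (k1 ** k2) X = Ad k1 (Ad k2 X)"
proof -
  have b1: "ctrans k1 ** k1 = mat 1" "det k1 = 1" and b2: "ctrans k2 ** k2 = mat 1" "det k2 = 1"
    using KC_basic[OF k1] KC_basic[OF k2] by auto
  have t1: "ctrans (k1 ** k2) ** (k1 ** k2) = mat 1"
  proof -
    have "ctrans (k1 ** k2) ** (k1 ** k2) = ctrans k2 ** (ctrans k1 ** k1) ** k2"
      by (simp add: ctrans_mult matrix_mul_assoc)
    then show ?thesis using b1 b2 by simp
  qed
  show kk: "k1 ** k2 \<in> K_SL2C" using t1 b1 b2 by (simp add: K_SL2C_def SL2C_def det_mul)
  show "Ad (k1 ** k2) X = Ad k1 (Ad k2 X)"
    using kk k1 k2 by (simp add: KC_Ad ctrans_mult matrix_mul_assoc)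
qed

lemma KC_rot:
  assumes o: "orthon e f"
  shows "\<exists>k\<in>K_SL2C. \<forall>x. Ad k (L3 x) = L3 (Rot e f t x)"
proof -
  define n1 where "n1 = e$2*f$3 - e$3*f$2"
  define n2 where "n2 = e$3*f$1 - e$1*f$3"
  define n3 where "n3 = e$1*f$2 - e$2*f$1"
  have h: "e$1*e$1 + e$2*e$2 + e$3*e$3 = 1" "f$1*f$1 + f$2*f$2 + f$3*f$3 = 1" "e$1*f$1 + e$2*f$2 + e$3*f$3 = 0"
    using o by (auto simp: orthon_def inner3)
  have nn: "n1*n1 + n2*n2 + n3*n3 = 1" using h unfolding n1_def n2_def n3_def by algebra
  define C where "C = cos (t/2)"
  define S where "S = sin (t/2)"
  have CS: "C*C + S*S = 1" unfolding C_def S_def using sin_cos_squared_add3[of "t/2"] by (simp add: algebra_simps)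
  have c2: "cos (2*(t/2)) = C*C - S*S" unfolding C_def S_def cos_double by (simp add: power2_eq_square)
  have s2: "sin (2*(t/2)) = 2*S*C" unfolding C_def S_def sin_double by simp
  define k where "k = kC C S n1 n2 n3"
  have S2: "S*S*(n1*n1 + n2*n2 + n3*n3) = S*S" using nn by simp
  have kT: "ctrans k ** k = mat 1"
    unfolding k_def using CS nn
    apply (simp add: cmat2_eq matrix_matrix_mult_def sum_2 ctrans_def complex_eq_iff mat_def)
    apply (intro conjI | simp add: algebra_simps | algebra)+
    done
  have kd: "det k = 1"
    unfolding k_def using CS nn
    apply (simp add: det_2 complex_eq_iff)
    apply (simp add: algebra_simps | algebra)+
    done
  have kK: "k \<in> K_SL2C" using kT kd by (simp add: K_SL2C_def SL2C_def)
  have "Ad k (L3 x) = L3 (Rot e f t x)" for x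
  proof -
    have "Ad k (L3 x) = k ** L3 x ** ctrans k" by (rule KC_Ad[OF kK])
    also have "\<dots> = L3 (Rot e f (2 * (t/2)) x)"
      unfolding k_def n1_def n2_def n3_def by (rule rot_identity[OF o CS c2 s2])
    finally show ?thesis by simp
  qed
  then show ?thesis using kK by blast
qed

lemma SC_lemma: "lemma_for s_SL2C K_SL2C"
proof (rule generic[where L = L3])
  show "DIM(real^3) \<ge> 2" by simp
  show "linear L3" by (rule L3_linear)
  show "inj L3" by (rule L3_inj)
  show "range L3 = s_SL2C" by (rule L3_range)
  show "L3 x ** L3 y - L3 y ** L3 x = 0 \<longleftrightarrow> (x = 0 \<or> (\<exists>c. y = c *\<^sub>R x))" for x y by (rule L3_comm)
  show "invertible k" if "k \<in> K_SL2C" for k using KC_inv that by blast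
  show "Ad k (L3 x) \<in> s_SL2C" if "k \<in> K_SL2C" for k x using KC_pres that by blast
  show "\<exists>k\<in>K_SL2C. \<forall>X. Ad k X = X" using KC_id Ad_one by blast
  show "\<exists>k\<in>K_SL2C. \<forall>x. Ad k (L3 x) = L3 (Rot e f t x)" if "orthon e f" for e f t using KC_rot that by blast
  show "\<exists>k\<in>K_SL2C. \<forall>X. Ad k X = Ad k1 (Ad k2 X)" if "k1 \<in> K_SL2C" "k2 \<in> K_SL2C" for k1 k2
    using KC_comp[OF that] by blast
qed

theorem lemma7p2:
  assumes "CARD('n::finite) \<ge> 2"
  shows "lemma_for s_SL2R K_SL2R
       \<and> lemma_for s_SL2C K_SL2C
       \<and> lemma_for (s_SOe :: (real^('n option)^('n option)) set) K_SOe"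
  using SR_lemma SC_lemma SO_lemma[OF assms] by blast

end
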